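(* Consider the equation $w_{1,2}+w_{0,2}w_{0,3}=0$ for $w=w(z_1,z_2)$, where $w_{k,l}:=\partial^{k+l}w/\partial z_1^k\partial z_2^l$. A differential function $\alpha$ depending only on $z_1,z_2$ and the parametric derivatives $w_{k,l}$, $k\in\mathbb N_0$, $l\in\{0,1,2\}$, satisfies $\hat{\mathrm D}_2\alpha=0$ (i.e., is a $z_2$-integral of the equation) if and only if it is a sufficiently smooth function of $z_1$ and finitely many of the quantities $\zeta^{ik}:=\mathrm D_1^kI^i$, $i=1,2$, $k\in\mathbb N_0$, i.e., \[ \alpha=\alpha(z_1,I^1,\mathrm D_1I^1,\dots,\mathrm D_1^rI^1,I^2,\mathrm D_1I^2,\dots,\mathrm D_1^rI^2)\quad\text{for some } r\in\mathbb N, \] where $I^1:=w_{1,1}+\frac12(w_{0,2})^2$ and $I^2:=w_{2,0}-\frac13(w_{0,2})^3-z_2\mathrm D_1I^1$.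
   Context: $\mathrm D_1,\mathrm D_2$ are the total derivative operators with respect to $z_1,z_2$. The equation is solved for $w_{0,3}$; derivatives $w_{k,l}$ with $l\geqslant3$ are principal and those with $l\leqslant2$ are parametric. $\hat{\mathrm D}_1,\hat{\mathrm D}_2$ denote the restrictions of $\mathrm D_1,\mathrm D_2$ to the infinite-order solution manifold of the equation, i.e., the total derivatives acting on functions of $z_1,z_2$ and parametric derivatives, where any principal derivative appearing is replaced by its expression via the equation and its differential consequences. *)

theory Defs
  imports "HOL-Analysis.Analysis"
begin

text \<open>Jet coordinates: z1, z2 and w_{k,l}. A jet point is a map coord => real;
  the space carries the product topology (Function_Topology).\<close>
datatype coord = Z1 | Z2 | W nat nat

definition pd :: "'a \<Rightarrow> (('a \<Rightarrow> real) \<Rightarrow> real) \<Rightarrow> ('a \<Rightarrow> real) \<Rightarrow> real" where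
  "pd c f p = deriv (\<lambda>t. f (p(c := t))) (p c)"

fun iter_pd :: "'a list \<Rightarrow> (('a \<Rightarrow> real) \<Rightarrow> real) \<Rightarrow> ('a \<Rightarrow> real) \<Rightarrow> real" where
  "iter_pd [] f = f"
| "iter_pd (c # cs) f = pd c (iter_pd cs f)"

definition smooth_on :: "('a \<Rightarrow> real) set \<Rightarrow> (('a \<Rightarrow> real) \<Rightarrow> real) \<Rightarrow> bool" where
  "smooth_on U f \<longleftrightarrow>
     (\<forall>cs. continuous_on U (iter_pd cs f) \<and>
        (\<forall>c. \<forall>p\<in>U. (\<lambda>t. iter_pd cs f (p(c := t))) differentiable (at (p c))))"

definition depends_upto :: "nat \<Rightarrow> ((coord \<Rightarrow> real) \<Rightarrow> real) \<Rightarrow> bool" where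
  "depends_upto N f \<longleftrightarrow>
     (\<forall>p q. p Z1 = q Z1 \<and> p Z2 = q Z2 \<and>
            (\<forall>k l. k \<le> N \<and> l \<le> 2 \<longrightarrow> p (W k l) = q (W k l)) \<longrightarrow> f p = f q)"

text \<open>Restricted total derivative D1-hat on functions of order <= N (w_{k+1,l}, l <= 2, stays parametric).\<close>
definition hatD1 :: "nat \<Rightarrow> ((coord \<Rightarrow> real) \<Rightarrow> real) \<Rightarrow> (coord \<Rightarrow> real) \<Rightarrow> real" where
  "hatD1 N f p = pd Z1 f p + (\<Sum>k\<le>N. \<Sum>l\<le>2. p (W (Suc k) l) * pd (W k l) f p)"

text \<open>The principal derivatives w_{k,3} = D1-hat^k (w_{0,3}) expressed through parametric ones,
  with w_{0,3} = - w_{1,2} / w_{0,2} from the equation w_{1,2} + w_{0,2} w_{0,3} = 0.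
  (w3 k has order <= k+1.)\<close>
fun w3 :: "nat \<Rightarrow> (coord \<Rightarrow> real) \<Rightarrow> real" where
  "w3 0 = (\<lambda>p. - p (W 1 2) / p (W 0 2))"
| "w3 (Suc k) = hatD1 (Suc k) (w3 k)"

definition hatD2 :: "nat \<Rightarrow> ((coord \<Rightarrow> real) \<Rightarrow> real) \<Rightarrow> (coord \<Rightarrow> real) \<Rightarrow> real" where
  "hatD2 N f p = pd Z2 f p +
     (\<Sum>k\<le>N. p (W k 1) * pd (W k 0) f p + p (W k 2) * pd (W k 1) f p
              + w3 k p * pd (W k 2) f p)"

text \<open>I^1 = w_{1,1} + (w_{0,2})^2/2 and zeta1 k = D1^k I^1 (order <= k+1).\<close>
definition I1 :: "(coord \<Rightarrow> real) \<Rightarrow> real" where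
  "I1 p = p (W 1 1) + (p (W 0 2))^2 / 2"

fun zeta1 :: "nat \<Rightarrow> (coord \<Rightarrow> real) \<Rightarrow> real" where
  "zeta1 0 = I1"
| "zeta1 (Suc k) = hatD1 (Suc k) (zeta1 k)"

text \<open>I^2 = w_{2,0} - (w_{0,2})^3/3 - z2 D1 I^1 and zeta2 k = D1^k I^2 (order <= k+2).\<close>
definition I2 :: "(coord \<Rightarrow> real) \<Rightarrow> real" where
  "I2 p = p (W 2 0) - (p (W 0 2))^3 / 3 - p Z2 * zeta1 1 p"

fun zeta2 :: "nat \<Rightarrow> (coord \<Rightarrow> real) \<Rightarrow> real" where
  "zeta2 0 = I2"
| "zeta2 (Suc k) = hatD1 (Suc k + 1) (zeta2 k)"

text \<open>Arguments (z1, zeta^{ik}, i = 1,2, k <= r) as a point of ((nat \<times> nat) option => real);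
  None is z1, Some (i,k) is zeta^{ik}; unused coordinates are 0.\<close>
definition zeta_args :: "nat \<Rightarrow> (coord \<Rightarrow> real) \<Rightarrow> (nat \<times> nat) option \<Rightarrow> real" where
  "zeta_args r q = (\<lambda>x. case x of
       None \<Rightarrow> q Z1
     | Some (i, k) \<Rightarrow> (if k \<le> r then (if i = 1 then zeta1 k q else if i = 2 then zeta2 k q else 0) else 0))"

end

theory Submission
  imports Defs
begin

lemma box_in_open:
  fixes U :: "('a \<Rightarrow> real) set"
  assumes "open U" "p \<in> U"
  shows "\<exists>C e. finite C \<and> e > 0 \<and> {v. \<forall>c\<in>C. \<bar>v c - p c\<bar> < e} \<subseteq> U"
proof -
  from product_topology_open_contains_basis[of "\<lambda>i. euclidean" UNIV U p] assms
  obtain X where X: "p \<in> (\<Pi>\<^sub>E i\<in>UNIV. X i)" "\<And>i. openin euclidean (X i)"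
     "finite {i. X i \<noteq> topspace euclidean}" "(\<Pi>\<^sub>E i\<in>UNIV. X i) \<subseteq> U"
    by (auto simp: open_fun_def)
  define C where "C = {i. X i \<noteq> UNIV}"
  have finC: "finite C" using X(3) by (simp add: C_def)
  have "\<forall>i\<in>C. \<exists>d>0. ball (p i) d \<subseteq> X i"
    using X(1,2) by (auto simp: open_contains_ball PiE_iff)
  then obtain d where d: "\<And>i. i \<in> C \<Longrightarrow> d i > 0 \<and> ball (p i) (d i) \<subseteq> X i"
    by metis
  define e where "e = Min (insert 1 (d ` C))"
  have epos: "e > 0" unfolding e_def using finC d by (subst Min_gr_iff) auto
  have ele: "e \<le> d i" if "i \<in> C" for i unfolding e_def using finC that by (intro Min_le) auto
  have "{v. \<forall>c\<in>C. \<bar>v c - p c\<bar> < e} \<subseteq> U"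
  proof
    fix v assume v: "v \<in> {v. \<forall>c\<in>C. \<bar>v c - p c\<bar> < e}"
    have "v i \<in> X i" for i
    proof (cases "i \<in> C")
      case True
      then have "\<bar>v i - p i\<bar> < d i" using v ele[OF True] by auto
      then have "v i \<in> ball (p i) (d i)" by (simp add: dist_real_def abs_minus_commute)
      then show ?thesis using d[OF True] by auto
    next
      case False then show ?thesis by (auto simp: C_def)
    qed
    then have "v \<in> (\<Pi>\<^sub>E i\<in>UNIV. X i)" by (auto simp: PiE_iff)
    then show "v \<in> U" using X(4) by auto
  qed
  then show ?thesis using finC epos by blast
qed

lemma tendsto_coordwise:
  fixes f :: "'b \<Rightarrow> 'a \<Rightarrow> real"
  assumes "\<And>c. ((\<lambda>t. f t c) \<longlongrightarrow> g c) F"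
  shows "(f \<longlongrightarrow> g) F"
proof (rule topological_tendstoI)
  fix S assume "open S" "g \<in> S"
  from box_in_open[OF this] obtain C e where Ce: "finite C" "e > 0"
    "{v. \<forall>c\<in>C. \<bar>v c - g c\<bar> < e} \<subseteq> S" by blast
  have "\<forall>\<^sub>F t in F. \<forall>c\<in>C. \<bar>f t c - g c\<bar> < e"
    using Ce(1) proof (rule eventually_ball_finite, intro ballI)
    fix c show "\<forall>\<^sub>F t in F. \<bar>f t c - g c\<bar> < e"
      using tendstoD[OF assms[of c] Ce(2)] by (simp add: dist_real_def)
  qed
  then show "\<forall>\<^sub>F t in F. f t \<in> S"
    by eventually_elim (use Ce(3) in blast)
qed

lemma upd_continuous: "continuous_on UNIV (\<lambda>t::real. (p::'a \<Rightarrow> real)(c := t))"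
  apply (rule continuous_on_coordinatewise_then_product)
  subgoal for i by (cases "i = c") (auto intro: continuous_intros)
  done

lemma upd_eventually:
  fixes p :: "'a \<Rightarrow> real"
  assumes "open Wo" "p \<in> Wo"
  shows "\<forall>\<^sub>F t in nhds (p c). p(c := t) \<in> Wo"
proof -
  have "open ((\<lambda>t. p(c := t)) -` Wo)"
    using upd_continuous assms(1) by (rule open_vimage[rotated])
  moreover have "p c \<in> (\<lambda>t. p(c := t)) -` Wo" using assms(2) by simp
  ultimately show ?thesis unfolding eventually_nhds by blast
qed

lemma pd_local:
  assumes "open Wo" "p \<in> Wo" "\<And>q. q \<in> Wo \<Longrightarrow> f q = g q"
  shows "pd c f p = pd c g p"
  unfolding pd_def
  by (rule deriv_cong_ev[OF _ refl]) (use upd_eventually[OF assms(1,2), of c] assms(3) in \<open>elim eventually_mono, simp\<close>)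

lemma pd_deriv:
  assumes "(\<lambda>t. F (p(c := t))) differentiable (at (p c))"
  shows "((\<lambda>t. F (p(c := t))) has_real_derivative pd c F p) (at (p c))"
  using assms unfolding pd_def by (simp add: DERIV_deriv_iff_real_differentiable)

lemma mvt_line:
  fixes g :: "real \<Rightarrow> real"
  assumes "\<And>s. \<bar>s - a\<bar> \<le> \<bar>b - a\<bar> \<Longrightarrow> (g has_real_derivative g' s) (at s)"
  shows "\<exists>\<xi>. \<bar>\<xi> - a\<bar> \<le> \<bar>b - a\<bar> \<and> g b - g a = g' \<xi> * (b - a)"
proof (cases "a < b")
  case True
  have cont: "continuous_on {a..b} g"
  proof (rule continuous_at_imp_continuous_on, rule ballI)
    fix s assume "s \<in> {a..b}" then have "\<bar>s - a\<bar> \<le> \<bar>b - a\<bar>" by auto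
    from assms[OF this] show "isCont g s" by (rule DERIV_isCont)
  qed
  have "g differentiable at x" if "a < x" "x < b" for x
  proof -
    have "\<bar>x - a\<bar> \<le> \<bar>b - a\<bar>" using that by auto
    from assms[OF this] show ?thesis by (auto simp: real_differentiable_def)
  qed
  from MVT[OF True cont this] obtain l z where z: "a < z" "z < b" "(g has_real_derivative l) (at z)"
    "g b - g a = (b - a) * l" by blast
  have "l = g' z" using assms[of z] z DERIV_unique by force
  then show ?thesis using z by (intro exI[of _ z]) auto
next
  case False
  show ?thesis
  proof (cases "a = b")
    case True then show ?thesis by auto
  next
    case False
    with \<open>\<not> a < b\<close> have ba: "b < a" by auto
    have cont: "continuous_on {b..a} g"
    proof (rule continuous_at_imp_continuous_on, rule ballI)
      fix s assume "s \<in> {b..a}" then have "\<bar>s - a\<bar> \<le> \<bar>b - a\<bar>" by auto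
      from assms[OF this] show "isCont g s" by (rule DERIV_isCont)
    qed
    have "g differentiable at x" if "b < x" "x < a" for x
    proof -
      have "\<bar>x - a\<bar> \<le> \<bar>b - a\<bar>" using that by auto
      from assms[OF this] show ?thesis by (auto simp: real_differentiable_def)
    qed
    from MVT[OF ba cont this] obtain l z where z: "b < z" "z < a" "(g has_real_derivative l) (at z)"
      "g a - g b = (a - b) * l" by blast
    have "l = g' z" using assms[of z] z ba DERIV_unique by force
    have e1: "\<bar>z - a\<bar> \<le> \<bar>b - a\<bar>" using z ba by auto
    have e2: "(a - b) * l = - (l * (b - a))" by (simp add: algebra_simps)
    have "g b - g a = g' z * (b - a)" using z(4) e2 \<open>l = g' z\<close> by (simp add: algebra_simps)
    then show ?thesis using e1 by blast
  qed
qed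

lemma curve_chain:
  fixes F :: "('a \<Rightarrow> real) \<Rightarrow> real" and \<gamma> :: "real \<Rightarrow> 'a \<Rightarrow> real"
  assumes "finite S"
    and "open Om" "\<gamma> t0 \<in> Om"
    and "\<And>c. c \<in> S \<Longrightarrow> continuous_on Om (pd c F)"
    and "\<And>c p. c \<in> S \<Longrightarrow> p \<in> Om \<Longrightarrow> (\<lambda>t. F (p(c:=t))) differentiable (at (p c))"
    and "\<And>t x. x \<notin> S \<Longrightarrow> \<gamma> t x = \<gamma> t0 x"
    and "\<And>x. x \<in> S \<Longrightarrow> ((\<lambda>t. \<gamma> t x) has_real_derivative \<gamma>' x) (at t0)"
  shows "((\<lambda>t. F (\<gamma> t)) has_real_derivative (\<Sum>x\<in>S. pd x F (\<gamma> t0) * \<gamma>' x)) (at t0)"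
  using assms
proof (induction S arbitrary: \<gamma> rule: finite_induct)
  case empty
  have "\<gamma> t = \<gamma> t0" for t by (rule ext) (rule empty.prems(5), simp)
  then have "(\<lambda>t. F (\<gamma> t)) = (\<lambda>t. F (\<gamma> t0))" by metis
  then show ?case by simp
next
  case (insert x S)
  note P = insert.prems
  define a where "a = \<gamma> t0 x"
  define \<delta> where "\<delta> t = (\<gamma> t)(x := a)" for t
  have \<delta>0: "\<delta> t0 = \<gamma> t0" unfolding \<delta>_def a_def by simp
  have IH: "((\<lambda>t. F (\<delta> t)) has_real_derivative (\<Sum>y\<in>S. pd y F (\<delta> t0) * \<gamma>' y)) (at t0)"
  proof (rule insert.IH)
    show "\<delta> t0 \<in> Om" using \<delta>0 P(2) by simp
    show "\<delta> t y = \<delta> t0 y" if "y \<notin> S" for t y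
      using that P(5)[of y t] unfolding \<delta>_def a_def by auto
    show "((\<lambda>t. \<delta> t y) has_real_derivative \<gamma>' y) (at t0)" if "y \<in> S" for y
    proof -
      have "y \<noteq> x" using that insert.hyps(2) by auto
      then show ?thesis using P(6)[of y] that unfolding \<delta>_def by simp
    qed
  qed (use insert in auto)
  have coordlim: "((\<lambda>t. \<gamma> t y) \<longlongrightarrow> \<gamma> t0 y) (at t0)" for y
  proof (cases "y \<in> insert x S")
    case True
    then show ?thesis using P(6)[OF True] DERIV_isCont by (auto simp: isCont_def)
  next
    case False
    then have "(\<lambda>t. \<gamma> t y) = (\<lambda>t. \<gamma> t0 y)" by (intro ext P(5))
    then show ?thesis by simp
  qed
  from box_in_open[OF P(1,2)] obtain C e where Ce: "finite C" "e > 0"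
    "{v. \<forall>c\<in>C. \<bar>v c - \<gamma> t0 c\<bar> < e} \<subseteq> Om" by blast
  have evC: "\<forall>\<^sub>F t in at t0. \<forall>c\<in>C. \<bar>\<gamma> t c - \<gamma> t0 c\<bar> < e"
    using Ce(1) proof (rule eventually_ball_finite, intro ballI)
    fix c show "\<forall>\<^sub>F t in at t0. \<bar>\<gamma> t c - \<gamma> t0 c\<bar> < e"
      using tendstoD[OF coordlim[of c] Ce(2)] by (simp add: dist_real_def)
  qed
  define Q where "Q t \<xi> \<longleftrightarrow> \<bar>\<xi> - a\<bar> \<le> \<bar>\<gamma> t x - a\<bar> \<and>
      F (\<gamma> t) - F (\<delta> t) = pd x F ((\<gamma> t)(x := \<xi>)) * (\<gamma> t x - a)" for t \<xi>
  have exQ: "\<exists>\<xi>. Q t \<xi>" if tC: "\<forall>c\<in>C. \<bar>\<gamma> t c - \<gamma> t0 c\<bar> < e" for t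
  proof -
    have inOm: "(\<gamma> t)(x := s) \<in> Om" if "\<bar>s - a\<bar> \<le> \<bar>\<gamma> t x - a\<bar>" for s
    proof -
      have "\<forall>c\<in>C. \<bar>((\<gamma> t)(x := s)) c - \<gamma> t0 c\<bar> < e"
        using tC that unfolding a_def by (auto dest: bspec[of _ _ x])
      then show ?thesis using Ce(3) by blast
    qed
    have "\<exists>\<xi>. \<bar>\<xi> - a\<bar> \<le> \<bar>\<gamma> t x - a\<bar> \<and>
      F ((\<gamma> t)(x := \<gamma> t x)) - F ((\<gamma> t)(x := a)) = pd x F ((\<gamma> t)(x := \<xi>)) * (\<gamma> t x - a)"
    proof (rule mvt_line[where g = "\<lambda>s. F ((\<gamma> t)(x := s))"])
      fix s assume "\<bar>s - a\<bar> \<le> \<bar>\<gamma> t x - a\<bar>"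
      have dd: "(\<lambda>u. F (((\<gamma> t)(x := s))(x := u))) differentiable (at (((\<gamma> t)(x := s)) x))"
        by (rule P(4)[OF insertI1 inOm[OF \<open>\<bar>s - a\<bar> \<le> \<bar>\<gamma> t x - a\<bar>\<close>]])
      have eq: "(\<lambda>u. F (((\<gamma> t)(x := s))(x := u))) = (\<lambda>u. F ((\<gamma> t)(x := u)))" by simp
      have eq2: "((\<gamma> t)(x := s)) x = s" by simp
      from pd_deriv[OF dd]
      show "((\<lambda>s. F ((\<gamma> t)(x := s))) has_real_derivative pd x F ((\<gamma> t)(x := s))) (at s)"
        unfolding eq eq2 .
    qed
    then show ?thesis unfolding Q_def \<delta>_def by simp
  qed
  define \<xi> where "\<xi> t = (SOME \<xi>. Q t \<xi>)" for t
  have evQ: "\<forall>\<^sub>F t in at t0. Q t (\<xi> t)"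
    using evC
  proof eventually_elim
    case (elim t)
    from exQ[OF elim] show "Q t (\<xi> t)" unfolding \<xi>_def by (rule someI_ex)
  qed
  have lim\<xi>: "((\<lambda>t. (\<gamma> t)(x := \<xi> t)) \<longlongrightarrow> \<gamma> t0) (at t0)"
  proof (rule tendsto_coordwise)
    fix c
    show "((\<lambda>t. ((\<gamma> t)(x := \<xi> t)) c) \<longlongrightarrow> \<gamma> t0 c) (at t0)"
    proof (cases "c = x")
      case True
      have "((\<lambda>t. \<gamma> t x - a) \<longlongrightarrow> 0) (at t0)"
        using coordlim[of x] unfolding a_def by (simp add: LIM_zero)
      then have l1: "((\<lambda>t. \<bar>\<gamma> t x - a\<bar>) \<longlongrightarrow> 0) (at t0)" by (simp add: tendsto_rabs_zero_iff)
      have l2: "\<forall>\<^sub>F t in at t0. norm (\<xi> t - a) \<le> \<bar>\<gamma> t x - a\<bar>"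
        using evQ by eventually_elim (auto simp: Q_def)
      have "((\<lambda>t. \<xi> t - a) \<longlongrightarrow> 0) (at t0)"
        by (rule Lim_null_comparison[OF l2 l1])
      then have "(\<xi> \<longlongrightarrow> a) (at t0)" by (simp add: LIM_zero_iff)
      then show ?thesis using True unfolding a_def by simp
    next
      case False
      then show ?thesis using coordlim[of c] by simp
    qed
  qed
  have evOm: "\<forall>\<^sub>F t in at t0. (\<gamma> t)(x := \<xi> t) \<in> Om"
    using topological_tendstoD[OF lim\<xi> P(1,2)] .
  have limpd: "((\<lambda>t. pd x F ((\<gamma> t)(x := \<xi> t))) \<longlongrightarrow> pd x F (\<gamma> t0)) (at t0)"
    by (rule continuous_on_tendsto_compose[OF P(3)[OF insertI1] lim\<xi> P(2) evOm])
  have limq: "((\<lambda>t. (\<gamma> t x - a) / (t - t0)) \<longlongrightarrow> \<gamma>' x) (at t0)"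
    using P(6)[of x] unfolding a_def by (simp add: has_field_derivative_iff)
  have lim: "((\<lambda>t. pd x F ((\<gamma> t)(x := \<xi> t)) * ((\<gamma> t x - a) / (t - t0))) \<longlongrightarrow> pd x F (\<gamma> t0) * \<gamma>' x) (at t0)"
    by (rule tendsto_mult[OF limpd limq])
  have main: "((\<lambda>t. F (\<gamma> t) - F (\<delta> t)) has_real_derivative pd x F (\<gamma> t0) * \<gamma>' x) (at t0)"
    unfolding has_field_derivative_iff
  proof (rule Lim_transform_eventually[OF lim])
    show "\<forall>\<^sub>F t in at t0. pd x F ((\<gamma> t)(x := \<xi> t)) * ((\<gamma> t x - a) / (t - t0)) =
        (F (\<gamma> t) - F (\<delta> t) - (F (\<gamma> t0) - F (\<delta> t0))) / (t - t0)"
      using evQ by eventually_elim (simp add: Q_def \<delta>0)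
  qed
  have "((\<lambda>t. (F (\<gamma> t) - F (\<delta> t)) + F (\<delta> t)) has_real_derivative
      pd x F (\<gamma> t0) * \<gamma>' x + (\<Sum>y\<in>S. pd y F (\<delta> t0) * \<gamma>' y)) (at t0)"
    by (rule DERIV_add[OF main IH])
  then show ?case using insert.hyps by (simp add: \<delta>0)
qed

datatype ex = Cst real | Var coord | Add ex ex | Mul ex ex | Inv02

fun ev :: "ex \<Rightarrow> (coord \<Rightarrow> real) \<Rightarrow> real" where
  "ev (Cst r) p = r"
| "ev (Var c) p = p c"
| "ev (Add a b) p = ev a p + ev b p"
| "ev (Mul a b) p = ev a p * ev b p"
| "ev Inv02 p = inverse (p (W 0 2))"

fun vars :: "ex \<Rightarrow> coord set" where
  "vars (Cst r) = {}"
| "vars (Var c) = {c}"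
| "vars (Add a b) = vars a \<union> vars b"
| "vars (Mul a b) = vars a \<union> vars b"
| "vars Inv02 = {W 0 2}"

fun ds :: "coord \<Rightarrow> ex \<Rightarrow> ex" where
  "ds c (Cst r) = Cst 0"
| "ds c (Var d) = Cst (if c = d then 1 else 0)"
| "ds c (Add a b) = Add (ds c a) (ds c b)"
| "ds c (Mul a b) = Add (Mul (ds c a) b) (Mul a (ds c b))"
| "ds c Inv02 = (if c = W 0 2 then Mul (Cst (-1)) (Mul Inv02 Inv02) else Cst 0)"

definition U0 :: "(coord \<Rightarrow> real) set" where "U0 = {p. p (W 0 2) \<noteq> 0}"

lemma open_U0: "open U0"
  unfolding U0_def by (rule open_Collect_neq) (auto intro: continuous_intros)

lemma finite_vars[simp]: "finite (vars e)"
  by (induction e) auto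

lemma ev_vars: "(\<And>c. c \<in> vars e \<Longrightarrow> p c = q c) \<Longrightarrow> ev e p = ev e q"
  by (induction e) auto

lemma ds_notin: "c \<notin> vars e \<Longrightarrow> ev (ds c e) p = 0"
  by (induction e) auto

lemma ev_deriv:
  assumes "p (W 0 2) \<noteq> 0"
  shows "((\<lambda>t. ev e (p(c:=t))) has_real_derivative ev (ds c e) p) (at (p c))"
proof (induction e)
  case (Cst r) then show ?case by simp
next
  case (Var d)
  show ?case
  proof (cases "c = d")
    case True
    then have "(\<lambda>t. ev (Var d) (p(c:=t))) = (\<lambda>t. t)" by auto
    then show ?thesis using True by (simp add: DERIV_ident)
  next
    case False
    then have "(\<lambda>t. ev (Var d) (p(c:=t))) = (\<lambda>t. p d)" by auto
    then show ?thesis using False by simp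
  qed
next
  case (Add a b)
  then show ?case by (simp add: DERIV_add)
next
  case (Mul a b)
  from DERIV_mult[OF Mul.IH] show ?case by (simp add: algebra_simps)
next
  case Inv02
  show ?case
  proof (cases "c = W 0 2")
    case True
    then have e: "(\<lambda>t. ev Inv02 (p(c:=t))) = (\<lambda>t. inverse t)" by auto
    have "(inverse has_real_derivative - (inverse (p c) * inverse (p c))) (at (p c))"
      using DERIV_inverse[of "p c"] assms True by simp
    then show ?thesis unfolding e using True by simp
  next
    case False
    then have "(\<lambda>t. ev Inv02 (p(c:=t))) = (\<lambda>t. inverse (p (W 0 2)))" by auto
    then show ?thesis using False by simp
  qed
qed

lemma pd_ev: "p \<in> U0 \<Longrightarrow> pd c (ev e) p = ev (ds c e) p"
proof -
  assume "p \<in> U0"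
  then have "p (W 0 2) \<noteq> 0" by (simp add: U0_def)
  from DERIV_imp_deriv[OF ev_deriv[where p=p and e=e and c=c, OF this]] show ?thesis by (simp add: pd_def)
qed

lemma ev_line_diff: "p \<in> U0 \<Longrightarrow> (\<lambda>t. ev e (p(c:=t))) differentiable (at (p c))"
proof -
  assume "p \<in> U0"
  then have "p (W 0 2) \<noteq> 0" by (simp add: U0_def)
  from ev_deriv[where p=p and e=e and c=c, OF this] show ?thesis by (auto simp: real_differentiable_def)
qed

lemma ev_cont: "continuous_on U0 (ev e)"
proof (induction e)
  case (Var c)
  have "continuous_on UNIV (\<lambda>p::coord\<Rightarrow>real. p c)" by simp
  then show ?case using continuous_on_subset by (simp, blast)
next
  case Inv02
  have "continuous_on UNIV (\<lambda>p::coord\<Rightarrow>real. p (W 0 2))" by simp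
  then have "continuous_on U0 (\<lambda>p::coord\<Rightarrow>real. p (W 0 2))"
    using continuous_on_subset by blast
  then show ?case by (auto intro!: continuous_on_inverse simp: U0_def)
qed (auto intro: continuous_intros)

fun Dg :: "(coord \<Rightarrow> ex) \<Rightarrow> ex \<Rightarrow> ex" where
  "Dg dv (Cst r) = Cst 0"
| "Dg dv (Var c) = dv c"
| "Dg dv (Add a b) = Add (Dg dv a) (Dg dv b)"
| "Dg dv (Mul a b) = Add (Mul (Dg dv a) b) (Mul a (Dg dv b))"
| "Dg dv Inv02 = Mul (Mul (Cst (-1)) (Mul Inv02 Inv02)) (dv (W 0 2))"

lemma Dg_sum:
  assumes "finite C" "vars e \<subseteq> C"
  shows "ev (Dg dv e) p = (\<Sum>c\<in>C. ev (dv c) p * ev (ds c e) p)"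
  using assms(2)
proof (induction e)
  case (Cst r) then show ?case by simp
next
  case (Var d)
  have "(\<Sum>c\<in>C. ev (dv c) p * ev (ds c (Var d)) p) = (\<Sum>c\<in>C. if c = d then ev (dv d) p else 0)"
    by (rule sum.cong) auto
  also have "\<dots> = ev (dv d) p" using Var assms(1) by (simp add: sum.delta')
  finally show ?case by simp
next
  case (Add a b)
  then show ?case by (simp add: sum.distrib distrib_left)
next
  case (Mul a b)
  then have IH: "ev (Dg dv a) p = (\<Sum>c\<in>C. ev (dv c) p * ev (ds c a) p)"
     "ev (Dg dv b) p = (\<Sum>c\<in>C. ev (dv c) p * ev (ds c b) p)" by auto
  have "(\<Sum>c\<in>C. ev (dv c) p * ev (ds c (Mul a b)) p) =
     (\<Sum>c\<in>C. ev (dv c) p * ev (ds c a) p * ev b p + ev a p * (ev (dv c) p * ev (ds c b) p))"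
    by (rule sum.cong) (simp_all add: algebra_simps)
  also have "\<dots> = (\<Sum>c\<in>C. ev (dv c) p * ev (ds c a) p) * ev b p + ev a p * (\<Sum>c\<in>C. ev (dv c) p * ev (ds c b) p)"
    by (simp add: sum.distrib sum_distrib_left sum_distrib_right)
  finally have X: "(\<Sum>c\<in>C. ev (dv c) p * ev (ds c (Mul a b)) p) =
    (\<Sum>c\<in>C. ev (dv c) p * ev (ds c a) p) * ev b p + ev a p * (\<Sum>c\<in>C. ev (dv c) p * ev (ds c b) p)" .
  show ?case unfolding X by (simp add: IH)
next
  case Inv02
  have "(\<Sum>c\<in>C. ev (dv c) p * ev (ds c Inv02) p) =
      (\<Sum>c\<in>C. if c = W 0 2 then ev (dv (W 0 2)) p * (- (inverse (p (W 0 2)) * inverse (p (W 0 2)))) else 0)"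
    by (rule sum.cong) auto
  also have "\<dots> = ev (dv (W 0 2)) p * (- (inverse (p (W 0 2)) * inverse (p (W 0 2))))"
    using Inv02 assms(1) by (simp add: sum.delta')
  finally show ?case by simp
qed

lemma vars_Dg: "vars (Dg dv e) \<subseteq> vars e \<union> (\<Union>c\<in>vars e. vars (dv c))"
  by (induction e) auto

fun d1v :: "coord \<Rightarrow> ex" where
  "d1v Z1 = Cst 1"
| "d1v Z2 = Cst 0"
| "d1v (W k l) = (if l \<le> 2 then Var (W (Suc k) l) else Cst 0)"

abbreviation D1s where "D1s \<equiv> Dg d1v"

fun w3e :: "nat \<Rightarrow> ex" where
  "w3e 0 = Mul (Cst (-1)) (Mul (Var (W 1 2)) Inv02)"
| "w3e (Suc k) = D1s (w3e k)"

fun d2v :: "coord \<Rightarrow> ex" where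
  "d2v Z1 = Cst 0"
| "d2v Z2 = Cst 1"
| "d2v (W k l) = (if l = 0 then Var (W k 1) else if l = 1 then Var (W k 2) else if l = 2 then w3e k else Cst 0)"

abbreviation D2s where "D2s \<equiv> Dg d2v"

lemma D1D2_comm: "ev (D1s (D2s e)) p = ev (D2s (D1s e)) p"
proof (induction e)
  case (Var c)
  then show ?case
  proof (cases c)
    case (W k l)
    then show ?thesis by (cases "l = 0"; cases "l = 1"; cases "l = 2") auto
  qed auto
next
  case (Mul a b)
  then show ?case by (simp add: algebra_simps)
next
  case Inv02
  show ?case by (simp add: algebra_simps)
qed auto

definition XS :: "nat \<Rightarrow> coord set" where "XS M = (\<lambda>(k,l). W k l) ` ({..M} \<times> {..2})"
definition Bd :: "nat \<Rightarrow> coord set" where "Bd M = insert Z1 (insert Z2 (XS M))"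
definition W2s :: "nat \<Rightarrow> coord set" where "W2s m = (\<lambda>j. W j 2) ` {..m}"

lemma XS_mem: "c \<in> XS M \<longleftrightarrow> (\<exists>k l. c = W k l \<and> k \<le> M \<and> l \<le> 2)"
  unfolding XS_def by auto

lemma finite_XS[simp]: "finite (XS M)" unfolding XS_def by simp
lemma finite_Bd[simp]: "finite (Bd M)" unfolding Bd_def by simp
lemma Z_notin_XS[simp]: "Z1 \<notin> XS M" "Z2 \<notin> XS M" unfolding XS_def by auto

lemma Bd_mono: "m \<le> n \<Longrightarrow> Bd m \<subseteq> Bd n"
  unfolding Bd_def XS_def by auto

lemma W2s_Bd: "W2s m \<subseteq> Bd m"
  unfolding W2s_def Bd_def XS_def by auto

lemma sum_XS: "(\<Sum>k\<le>M. \<Sum>l\<le>(2::nat). f (W k l)) = (\<Sum>c\<in>XS M. f c)"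
proof -
  have inj: "inj_on (\<lambda>(k,l). W k l) ({..M} \<times> {..2::nat})" by (auto simp: inj_on_def)
  have "(\<Sum>c\<in>XS M. f c) = (\<Sum>x\<in>{..M} \<times> {..2::nat}. f (case x of (k,l) \<Rightarrow> W k l))"
    unfolding XS_def by (subst sum.reindex[OF inj]) (simp add: comp_def)
  also have "\<dots> = (\<Sum>k\<le>M. \<Sum>l\<le>(2::nat). f (W k l))"
    by (simp add: sum.cartesian_product split_def)
  finally show ?thesis by simp
qed

lemma sum_le2: "(\<Sum>l\<le>(2::nat). g l) = g 0 + g 1 + (g 2 :: real)"
  by (simp add: numeral_2_eq_2 atMost_Suc)

lemma hatD1_sum: "hatD1 M f p = pd Z1 f p + (\<Sum>c\<in>XS M. ev (d1v c) p * pd c f p)"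
proof -
  have "(\<Sum>k\<le>M. \<Sum>l\<le>2. p (W (Suc k) l) * pd (W k l) f p) =
        (\<Sum>k\<le>M. \<Sum>l\<le>(2::nat). ev (d1v (W k l)) p * pd (W k l) f p)"
    by (intro sum.cong refl) auto
  then have "hatD1 M f p = pd Z1 f p + (\<Sum>k\<le>M. \<Sum>l\<le>(2::nat). ev (d1v (W k l)) p * pd (W k l) f p)"
    unfolding hatD1_def by simp
  also have "\<dots> = pd Z1 f p + (\<Sum>c\<in>XS M. ev (d1v c) p * pd c f p)"
    by (simp only: sum_XS[symmetric])
  finally show ?thesis .
qed

fun D2c :: "coord \<Rightarrow> (coord \<Rightarrow> real) \<Rightarrow> real" where
  "D2c Z1 p = 0"
| "D2c Z2 p = 1"
| "D2c (W k l) p = (if l = 0 then p (W k 1) else if l = 1 then p (W k 2) else if l = 2 then w3 k p else 0)"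

lemma hatD2_sum: "hatD2 M f p = (\<Sum>c\<in>insert Z2 (XS M). D2c c p * pd c f p)"
proof -
  have "(\<Sum>k\<le>M. p (W k 1) * pd (W k 0) f p + p (W k 2) * pd (W k 1) f p + w3 k p * pd (W k 2) f p) =
        (\<Sum>k\<le>M. \<Sum>l\<le>(2::nat). D2c (W k l) p * pd (W k l) f p)"
    by (intro sum.cong refl) (simp add: sum_le2)
  then have "hatD2 M f p = D2c Z2 p * pd Z2 f p + (\<Sum>k\<le>M. \<Sum>l\<le>(2::nat). D2c (W k l) p * pd (W k l) f p)"
    unfolding hatD2_def by simp
  also have "\<dots> = D2c Z2 p * pd Z2 f p + (\<Sum>c\<in>XS M. D2c c p * pd c f p)"
    by (simp only: sum_XS[symmetric])
  finally show ?thesis by simp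
qed

lemma hatD1_ev:
  assumes "p \<in> U0" "\<And>q. q \<in> U0 \<Longrightarrow> f q = ev e q" "vars e \<subseteq> Bd M"
  shows "hatD1 M f p = ev (D1s e) p"
proof -
  have pdf: "pd c f p = ev (ds c e) p" for c
    using pd_local[OF open_U0 assms(1), of f "ev e" c] assms(2) pd_ev[OF assms(1)] by simp
  have "ev (D1s e) p = (\<Sum>c\<in>Bd M. ev (d1v c) p * ev (ds c e) p)"
    by (rule Dg_sum[OF finite_Bd assms(3)])
  also have "\<dots> = ev (ds Z1 e) p + (\<Sum>c\<in>XS M. ev (d1v c) p * ev (ds c e) p)"
    unfolding Bd_def by (subst sum.insert; simp)+
  finally show ?thesis by (simp add: hatD1_sum pdf)
qed

lemma vars_D1s_Bd: "vars e \<subseteq> Bd m \<Longrightarrow> vars (D1s e) \<subseteq> Bd (Suc m)"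
proof -
  assume a: "vars e \<subseteq> Bd m"
  have "vars (d1v c) \<subseteq> Bd (Suc m)" if "c \<in> Bd m" for c
    using that by (cases c) (auto simp: Bd_def XS_def)
  note h = this
  have "vars (D1s e) \<subseteq> vars e \<union> (\<Union>c\<in>vars e. vars (d1v c))" by (rule vars_Dg)
  also have "\<dots> \<subseteq> Bd (Suc m)"
  proof (rule Un_least)
    show "vars e \<subseteq> Bd (Suc m)" using a Bd_mono[of m "Suc m"] by (simp add: subset_trans)
    show "(\<Union>c\<in>vars e. vars (d1v c)) \<subseteq> Bd (Suc m)"
      by (rule UN_least) (use a h in blast)
  qed
  finally show ?thesis .
qed

lemma vars_D1s_W2: "vars e \<subseteq> W2s m \<Longrightarrow> vars (D1s e) \<subseteq> W2s (Suc m)"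
proof -
  assume a: "vars e \<subseteq> W2s m"
  have "vars (d1v c) \<subseteq> W2s (Suc m)" if "c \<in> W2s m" for c
    using that by (auto simp: W2s_def)
  moreover have "W2s m \<subseteq> W2s (Suc m)" by (auto simp: W2s_def)
  ultimately have h: "\<And>c. c \<in> W2s m \<Longrightarrow> vars (d1v c) \<subseteq> W2s (Suc m)" "W2s m \<subseteq> W2s (Suc m)" by auto
  have "vars (D1s e) \<subseteq> vars e \<union> (\<Union>c\<in>vars e. vars (d1v c))" by (rule vars_Dg)
  also have "\<dots> \<subseteq> W2s (Suc m)"
  proof (rule Un_least)
    show "vars e \<subseteq> W2s (Suc m)" using a h by blast
    show "(\<Union>c\<in>vars e. vars (d1v c)) \<subseteq> W2s (Suc m)"
      by (rule UN_least) (use a h in blast)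
  qed
  finally show ?thesis .
qed

lemma vars_w3e: "vars (w3e k) \<subseteq> W2s (Suc k)"
  by (induction k) (auto simp: W2s_def intro!: vars_D1s_W2[simplified W2s_def])

lemma vars_w3e_Bd: "vars (w3e k) \<subseteq> Bd (Suc k)"
  using vars_w3e W2s_Bd by blast

lemma w3_ev: "p \<in> U0 \<Longrightarrow> w3 k p = ev (w3e k) p"
proof (induction k arbitrary: p)
  case 0 then show ?case by (simp add: divide_inverse)
next
  case (Suc k)
  have "w3 (Suc k) p = hatD1 (Suc k) (w3 k) p" by simp
  also have "\<dots> = ev (D1s (w3e k)) p"
    by (rule hatD1_ev[OF Suc.prems Suc.IH]) (use vars_w3e_Bd in auto)
  finally show ?case by simp
qed

lemma D2c_ev: "p \<in> U0 \<Longrightarrow> D2c c p = ev (d2v c) p"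
  by (cases c) (auto simp: w3_ev)

lemma hatD2_ev:
  assumes "p \<in> U0" "\<And>q. q \<in> U0 \<Longrightarrow> f q = ev e q" "vars e \<subseteq> Bd M"
  shows "hatD2 M f p = ev (D2s e) p"
proof -
  have pdf: "pd c f p = ev (ds c e) p" for c
    using pd_local[OF open_U0 assms(1), of f "ev e" c] assms(2) pd_ev[OF assms(1)] by simp
  have "ev (D2s e) p = (\<Sum>c\<in>Bd M. ev (d2v c) p * ev (ds c e) p)"
    by (rule Dg_sum[OF finite_Bd assms(3)])
  also have "\<dots> = (\<Sum>c\<in>insert Z2 (XS M). ev (d2v c) p * ev (ds c e) p)"
    unfolding Bd_def by (subst sum.insert; simp)
  also have "\<dots> = (\<Sum>c\<in>insert Z2 (XS M). D2c c p * pd c f p)"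
    by (rule sum.cong) (simp_all add: pdf D2c_ev[OF assms(1)])
  finally show ?thesis by (simp add: hatD2_sum)
qed

fun Pe :: "nat \<Rightarrow> ex" where
  "Pe 0 = Mul (Cst (1/2)) (Mul (Var (W 0 2)) (Var (W 0 2)))"
| "Pe (Suc k) = D1s (Pe k)"

fun Qe :: "nat \<Rightarrow> ex" where
  "Qe 0 = Mul (Cst (1/3)) (Mul (Var (W 0 2)) (Mul (Var (W 0 2)) (Var (W 0 2))))"
| "Qe (Suc k) = D1s (Qe k)"

definition z1e :: "nat \<Rightarrow> ex" where
  "z1e k = Add (Var (W (Suc k) 1)) (Pe k)"

definition z2e :: "nat \<Rightarrow> ex" where
  "z2e k = Add (Var (W (Suc (Suc k)) 0)) (Add (Mul (Cst (-1)) (Qe k)) (Mul (Cst (-1)) (Mul (Var Z2) (z1e (Suc k)))))"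

lemma D1s_z1e: "D1s (z1e k) = z1e (Suc k)"
  by (simp add: z1e_def)

lemma D1s_z2e_ev: "ev (D1s (z2e k)) p = ev (z2e (Suc k)) p"
  by (simp add: z2e_def z1e_def)

lemma vars_Pe: "vars (Pe k) \<subseteq> W2s k"
proof (induction k)
  case 0 then show ?case by (simp add: W2s_def)
next
  case (Suc k) then show ?case by (simp add: vars_D1s_W2)
qed

lemma vars_Qe: "vars (Qe k) \<subseteq> W2s k"
proof (induction k)
  case 0 then show ?case by (simp add: W2s_def)
next
  case (Suc k) then show ?case by (simp add: vars_D1s_W2)
qed

lemma vars_z1e: "vars (z1e k) \<subseteq> Bd (Suc k)"
proof -
  have "vars (Pe k) \<subseteq> Bd (Suc k)" by (rule subset_trans[OF vars_Pe subset_trans[OF W2s_Bd Bd_mono]]) simp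
  moreover have "W (Suc k) 1 \<in> Bd (Suc k)" by (simp add: Bd_def XS_mem)
  ultimately show ?thesis by (simp add: z1e_def)
qed

lemma vars_z2e: "vars (z2e k) \<subseteq> Bd (Suc (Suc k))"
proof -
  have "vars (Qe k) \<subseteq> Bd (Suc (Suc k))" by (rule subset_trans[OF vars_Qe subset_trans[OF W2s_Bd Bd_mono]]) simp
  moreover have "vars (z1e (Suc k)) \<subseteq> Bd (Suc (Suc k))" by (rule vars_z1e)
  moreover have "W (Suc (Suc k)) 0 \<in> Bd (Suc (Suc k))" by (simp add: Bd_def XS_mem)
  moreover have "Z2 \<in> Bd (Suc (Suc k))" by (simp add: Bd_def)
  ultimately show ?thesis by (simp add: z2e_def)
qed

lemma zeta1_ev: "p \<in> U0 \<Longrightarrow> zeta1 k p = ev (z1e k) p"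
proof (induction k arbitrary: p)
  case 0 then show ?case by (simp add: I1_def z1e_def power2_eq_square)
next
  case (Suc k)
  have "zeta1 (Suc k) p = hatD1 (Suc k) (zeta1 k) p" by simp
  also have "\<dots> = ev (D1s (z1e k)) p"
    by (rule hatD1_ev[OF Suc.prems Suc.IH vars_z1e])
  finally show ?case by (simp add: D1s_z1e)
qed

lemma ev_z1e_1: "ev (z1e (Suc 0)) p = p (W (Suc (Suc 0)) (Suc 0)) + p (W 0 (Suc (Suc 0))) * p (W (Suc 0) (Suc (Suc 0)))"
  by (simp add: z1e_def numeral_2_eq_2 algebra_simps)

lemma vars_z2e': "vars (z2e k) \<subseteq> Bd (Suc k + 1)"
  using vars_z2e[of k] by simp

lemma zeta2_ev: "p \<in> U0 \<Longrightarrow> zeta2 k p = ev (z2e k) p"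
proof (induction k arbitrary: p)
  case 0 then show ?case
    by (simp add: I2_def z2e_def zeta1_ev[of p 1, simplified] power3_eq_cube numeral_2_eq_2 mult.assoc)
next
  case (Suc k)
  have "zeta2 (Suc k) p = hatD1 (Suc k + 1) (zeta2 k) p" by simp
  also have "\<dots> = ev (D1s (z2e k)) p"
    by (rule hatD1_ev[OF Suc.prems Suc.IH vars_z2e'])
  finally show ?case by (simp add: D1s_z2e_ev)
qed

lemma Dg_cong:
  assumes "p \<in> U0" "\<And>q. q \<in> U0 \<Longrightarrow> ev a q = ev b q"
  shows "ev (Dg dv a) p = ev (Dg dv b) p"
proof -
  have fin: "finite (vars a \<union> vars b)" by simp
  have "ev (ds c a) p = ev (ds c b) p" for c
  proof -
    have "ev (ds c a) p = pd c (ev a) p" using pd_ev[OF assms(1)] by simp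
    also have "\<dots> = pd c (ev b) p" by (rule pd_local[OF open_U0 assms(1) assms(2)])
    also have "\<dots> = ev (ds c b) p" using pd_ev[OF assms(1)] by simp
    finally show ?thesis .
  qed
  then show ?thesis
    using Dg_sum[OF fin, of a dv p] Dg_sum[OF fin, of b dv p] by simp
qed

lemma D2s_z1e: "p \<in> U0 \<Longrightarrow> ev (D2s (z1e k)) p = 0"
proof (induction k arbitrary: p)
  case 0
  then have "p (W 0 2) \<noteq> 0" by (simp add: U0_def)
  then show ?case by (simp add: z1e_def field_simps)
next
  case (Suc k)
  have "ev (D2s (z1e (Suc k))) p = ev (D1s (D2s (z1e k))) p"
    by (simp add: D1D2_comm D1s_z1e[symmetric])
  also have "\<dots> = ev (D1s (Cst 0)) p"
    by (rule Dg_cong[OF Suc.prems]) (simp add: Suc.IH)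
  finally show ?case by simp
qed

lemma D2s_z2e: "p \<in> U0 \<Longrightarrow> ev (D2s (z2e k)) p = 0"
proof (induction k arbitrary: p)
  case 0
  then have "p (W 0 2) \<noteq> 0" by (simp add: U0_def)
  then show ?case using D2s_z1e[OF 0, of "Suc 0"]
    by (simp add: z2e_def ev_z1e_1 field_simps numeral_2_eq_2)
next
  case (Suc k)
  have "ev (D2s (z2e (Suc k))) p = ev (D2s (D1s (z2e k))) p"
    by (rule Dg_cong[OF Suc.prems]) (simp add: D1s_z2e_ev)
  also have "\<dots> = ev (D1s (D2s (z2e k))) p" by (simp add: D1D2_comm)
  also have "\<dots> = ev (D1s (Cst 0)) p"
    by (rule Dg_cong[OF Suc.prems]) (simp add: Suc.IH)
  finally show ?case by simp
qed

lemma hatD2_zeta1: "p \<in> U0 \<Longrightarrow> Suc k \<le> M \<Longrightarrow> hatD2 M (zeta1 k) p = 0"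
proof -
  assume a: "p \<in> U0" "Suc k \<le> M"
  have "vars (z1e k) \<subseteq> Bd M" using vars_z1e Bd_mono[OF a(2)] by (rule subset_trans)
  from hatD2_ev[OF a(1) zeta1_ev this] show ?thesis using D2s_z1e[OF a(1)] by simp
qed

lemma hatD2_zeta2: "p \<in> U0 \<Longrightarrow> Suc (Suc k) \<le> M \<Longrightarrow> hatD2 M (zeta2 k) p = 0"
proof -
  assume a: "p \<in> U0" "Suc (Suc k) \<le> M"
  have "vars (z2e k) \<subseteq> Bd M" using vars_z2e Bd_mono[OF a(2)] by (rule subset_trans)
  from hatD2_ev[OF a(1) zeta2_ev this] show ?thesis using D2s_z2e[OF a(1)] by simp
qed

lemma ds_shift:
  assumes "vars e \<subseteq> Bd m" "l \<le> 2"
  shows "ev (ds (W (Suc m) l) (D1s e)) p = ev (ds (W m l) e) p"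
  using assms(1)
proof (induction e)
  case (Var c)
  then show ?case using assms(2) by (cases c) (auto simp: Bd_def XS_def)
next
  case (Add a b)
  then show ?case by simp
next
  case (Mul a b)
  have na: "W (Suc m) l \<notin> vars a" and nb: "W (Suc m) l \<notin> vars b"
    using Mul.prems by (auto simp: Bd_def XS_def)
  then show ?case using Mul by (simp add: ds_notin[OF na] ds_notin[OF nb])
next
  case Inv02
  then show ?case by auto
qed auto

lemma w3_top: "ev (ds (W (Suc k) 2) (w3e k)) p = - inverse (p (W 0 2))"
proof (induction k)
  case 0 then show ?case by simp
next
  case (Suc k)
  have "ev (ds (W (Suc (Suc k)) 2) (w3e (Suc k))) p = ev (ds (W (Suc k) 2) (w3e k)) p"
    using ds_shift[OF vars_w3e_Bd, of 2 k p] by simp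
  then show ?case using Suc by simp
qed

lemma Bd_mem: "c \<in> Bd N \<longleftrightarrow> c = Z1 \<or> c = Z2 \<or> (\<exists>k l. c = W k l \<and> k \<le> N \<and> l \<le> 2)"
  unfolding Bd_def insert_iff XS_mem by blast

lemma depends_upd:
  assumes "depends_upto N f" "c \<notin> Bd N"
  shows "f (p(c := t)) = f p"
  using assms unfolding depends_upto_def Bd_mem by (metis fun_upd_other)

lemma pd_irrel:
  assumes "depends_upto N f" "c \<notin> Bd N"
  shows "pd c f p = 0"
proof -
  have "(\<lambda>t. f (p(c := t))) = (\<lambda>t. f p)" using depends_upd[OF assms] by auto
  then show ?thesis unfolding pd_def by simp
qed

lemma hatD2_extend:
  assumes "depends_upto N f" "N \<le> M"
  shows "hatD2 M f p = hatD2 N f p"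
proof -
  have "XS N \<subseteq> XS M" unfolding XS_def using assms(2) by (intro image_mono Sigma_mono) auto
  then have sub: "insert Z2 (XS N) \<subseteq> insert Z2 (XS M)" by blast
  have "(\<Sum>c\<in>insert Z2 (XS M). D2c c p * pd c f p) = (\<Sum>c\<in>insert Z2 (XS N). D2c c p * pd c f p)"
  proof (rule sum.mono_neutral_right[OF _ sub])
    show "\<forall>c\<in>insert Z2 (XS M) - insert Z2 (XS N). D2c c p * pd c f p = 0"
    proof
      fix c assume c: "c \<in> insert Z2 (XS M) - insert Z2 (XS N)"
      then have "c \<notin> Bd N" unfolding Bd_def using Z_notin_XS[of M] by auto
      then show "D2c c p * pd c f p = 0" using pd_irrel[OF assms(1)] by simp
    qed
  qed simp
  then show ?thesis by (simp add: hatD2_sum)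
qed

lemma D2_sum_ev:
  assumes "p \<in> U0" "vars e \<subseteq> Bd M"
  shows "(\<Sum>x\<in>insert Z2 (XS M). D2c x p * ev (ds x e) p) = ev (D2s e) p"
proof -
  have "ev (D2s e) p = (\<Sum>c\<in>Bd M. ev (d2v c) p * ev (ds c e) p)"
    by (rule Dg_sum[OF finite_Bd assms(2)])
  also have "\<dots> = (\<Sum>c\<in>insert Z2 (XS M). ev (d2v c) p * ev (ds c e) p)"
    unfolding Bd_def by (subst sum.insert; simp)
  also have "\<dots> = (\<Sum>c\<in>insert Z2 (XS M). D2c c p * ev (ds c e) p)"
    by (rule sum.cong) (simp_all add: D2c_ev[OF assms(1)])
  finally show ?thesis by simp
qed

definition PhiE :: "nat \<Rightarrow> (nat \<times> nat) option \<Rightarrow> ex" where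
  "PhiE r y = (case y of None \<Rightarrow> Var Z1
     | Some (i, k) \<Rightarrow> (if k \<le> r then (if i = 1 then z1e k else if i = 2 then z2e k else Cst 0) else Cst 0))"

lemma zeta_args_ev: "q \<in> U0 \<Longrightarrow> zeta_args r q y = ev (PhiE r y) q"
  unfolding zeta_args_def PhiE_def
  by (auto split: option.splits simp: zeta1_ev zeta2_ev)

lemma vars_PhiE: "vars (PhiE r y) \<subseteq> Bd (r + 2)"
proof -
  have a: "vars (z1e k) \<subseteq> Bd (r + 2)" if "k \<le> r" for k
    by (rule subset_trans[OF vars_z1e Bd_mono]) (use that in simp)
  have b: "vars (z2e k) \<subseteq> Bd (r + 2)" if "k \<le> r" for k
    by (rule subset_trans[OF vars_z2e Bd_mono]) (use that in simp)
  show ?thesis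
  proof (cases y)
    case None then show ?thesis by (simp add: PhiE_def Bd_def)
  next
    case (Some z)
    obtain i k where z: "z = (i, k)" by fastforce
    show ?thesis
    proof (cases "k \<le> r")
      case True
      then show ?thesis using a[OF True] b[OF True] by (simp add: PhiE_def Some z)
    next
      case False
      then show ?thesis by (simp add: PhiE_def Some z)
    qed
  qed
qed

lemma D2s_PhiE: "q \<in> U0 \<Longrightarrow> ev (D2s (PhiE r y)) q = 0"
  unfolding PhiE_def by (auto split: option.splits simp: D2s_z1e D2s_z2e)

definition Yset :: "nat \<Rightarrow> (nat \<times> nat) option set" where
  "Yset r = insert None ((\<lambda>(i,k). Some (i,k)) ` ({1,2} \<times> {..r}))"

lemma finite_Yset[simp]: "finite (Yset r)" unfolding Yset_def by simp

lemma zeta_args_outside: "y \<notin> Yset r \<Longrightarrow> zeta_args r q y = 0"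
  unfolding Yset_def zeta_args_def by (auto split: option.splits)

lemma zeta_args_deriv:
  assumes "q \<in> U0"
  shows "((\<lambda>t. zeta_args r (q(c:=t)) y) has_real_derivative ev (ds c (PhiE r y)) q) (at (q c))"
proof -
  have ev: "\<forall>\<^sub>F t in nhds (q c). q(c := t) \<in> U0" by (rule upd_eventually[OF open_U0 assms])
  have d: "((\<lambda>t. ev (PhiE r y) (q(c:=t))) has_real_derivative ev (ds c (PhiE r y)) q) (at (q c))"
    using ev_deriv assms by (simp add: U0_def)
  have e2: "\<forall>\<^sub>F t in nhds (q c). zeta_args r (q(c:=t)) y = ev (PhiE r y) (q(c:=t))"
    using ev by eventually_elim (simp add: zeta_args_ev)
  show ?thesis using DERIV_cong_ev[OF refl e2 refl] d by simp
qed

lemma smooth_pd_cont: "smooth_on Om F \<Longrightarrow> continuous_on Om (pd y F)"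
  unfolding smooth_on_def by (metis iter_pd.simps)

lemma smooth_diff: "smooth_on Om F \<Longrightarrow> p \<in> Om \<Longrightarrow> (\<lambda>t. F (p(y:=t))) differentiable (at (p y))"
  unfolding smooth_on_def by (metis iter_pd.simps(1))

lemma smooth_cont: "smooth_on Om F \<Longrightarrow> continuous_on Om F"
  unfolding smooth_on_def by (metis iter_pd.simps(1))

lemma backward:
  assumes "open V" "V \<subseteq> U0" "depends_upto N \<alpha>" "open Om" "smooth_on Om F"
    "\<forall>q\<in>V. zeta_args r q \<in> Om \<and> \<alpha> q = F (zeta_args r q)" "q \<in> V"
  shows "hatD2 N \<alpha> q = 0"
proof -
  define M where "M = max N (r + 2)"
  have q0: "q \<in> U0" using assms(2,7) by auto
  have pda: "pd c \<alpha> q = (\<Sum>y\<in>Yset r. pd y F (zeta_args r q) * ev (ds c (PhiE r y)) q)" for c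
  proof -
    have "pd c \<alpha> q = pd c (\<lambda>q. F (zeta_args r q)) q"
      by (rule pd_local[OF assms(1) assms(7)]) (use assms(6) in auto)
    moreover have "((\<lambda>t. F (zeta_args r (q(c:=t)))) has_real_derivative
        (\<Sum>y\<in>Yset r. pd y F (zeta_args r (q(c:=q c))) * ev (ds c (PhiE r y)) q)) (at (q c))"
    proof (rule curve_chain[where \<gamma> = "\<lambda>t. zeta_args r (q(c:=t))"])
      show "zeta_args r (q(c := q c)) \<in> Om" using assms(6,7) by simp
      show "continuous_on Om (pd y F)" for y using smooth_pd_cont[OF assms(5)] .
      show "(\<lambda>t. F (p(y:=t))) differentiable (at (p y))" if "p \<in> Om" for y p
        using smooth_diff[OF assms(5) that] .
      show "zeta_args r (q(c := t)) x = zeta_args r (q(c := q c)) x" if "x \<notin> Yset r" for t x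
        using zeta_args_outside[OF that] by simp
      show "((\<lambda>t. zeta_args r (q(c := t)) x) has_real_derivative ev (ds c (PhiE r x)) q) (at (q c))" for x
        by (rule zeta_args_deriv[OF q0])
    qed (use assms(4) in simp_all)
    ultimately show ?thesis unfolding pd_def by (simp add: DERIV_imp_deriv)
  qed
  have vM: "vars (PhiE r y) \<subseteq> Bd M" for y
    by (rule subset_trans[OF vars_PhiE Bd_mono]) (simp add: M_def)
  have "hatD2 N \<alpha> q = hatD2 M \<alpha> q"
    by (rule hatD2_extend[OF assms(3), symmetric]) (simp add: M_def)
  also have "\<dots> = (\<Sum>x\<in>insert Z2 (XS M). D2c x q * pd x \<alpha> q)" by (rule hatD2_sum)
  also have "\<dots> = (\<Sum>x\<in>insert Z2 (XS M). \<Sum>y\<in>Yset r. pd y F (zeta_args r q) * (D2c x q * ev (ds x (PhiE r y)) q))"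
    by (simp add: pda sum_distrib_left algebra_simps)
  also have "\<dots> = (\<Sum>y\<in>Yset r. pd y F (zeta_args r q) * (\<Sum>x\<in>insert Z2 (XS M). D2c x q * ev (ds x (PhiE r y)) q))"
    by (subst sum.swap) (simp only: sum_distrib_left)
  also have "\<dots> = (\<Sum>y\<in>Yset r. pd y F (zeta_args r q) * ev (D2s (PhiE r y)) q)"
    by (simp add: D2_sum_ev[OF q0 vM])
  also have "\<dots> = 0" by (simp add: D2s_PhiE[OF q0])
  finally show ?thesis .
qed

fun pse :: "nat \<Rightarrow> coord \<Rightarrow> ex" where
  "pse N Z1 = Var Z1"
| "pse N Z2 = Var Z2"
| "pse N (W j l) = (if l = 1 \<and> 1 \<le> j \<and> j \<le> N then z1e (j - 1)
     else if l = 0 \<and> 2 \<le> j \<and> j \<le> N then z2e (j - 2) else Var (W j l))"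

fun pie :: "nat \<Rightarrow> coord \<Rightarrow> ex" where
  "pie N Z1 = Var Z1"
| "pie N Z2 = Var Z2"
| "pie N (W j l) = (if l = 1 \<and> 1 \<le> j \<and> j \<le> N then Add (Var (W j l)) (Mul (Cst (-1)) (Pe (j - 1)))
     else if l = 0 \<and> 2 \<le> j \<and> j \<le> N then Add (Var (W j l)) (Add (Qe (j - 2)) (Mul (Var Z2) (Var (W j 1))))
     else Var (W j l))"

definition psi :: "nat \<Rightarrow> (coord \<Rightarrow> real) \<Rightarrow> coord \<Rightarrow> real" where
  "psi N q = (\<lambda>c. ev (pse N c) q)"

definition psinv :: "nat \<Rightarrow> (coord \<Rightarrow> real) \<Rightarrow> coord \<Rightarrow> real" where
  "psinv N v = (\<lambda>c. ev (pie N c) v)"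

definition slot :: "nat \<Rightarrow> coord \<Rightarrow> bool" where
  "slot N c \<longleftrightarrow> (\<exists>j. (c = W j 1 \<and> 1 \<le> j \<and> j \<le> N) \<or> (c = W j 0 \<and> 2 \<le> j \<and> j \<le> N))"

lemma pse_nonslot: "\<not> slot N c \<Longrightarrow> pse N c = Var c"
  by (cases c) (auto simp: slot_def)

lemma pie_nonslot: "\<not> slot N c \<Longrightarrow> pie N c = Var c"
  by (cases c) (auto simp: slot_def)

lemma slot_Bd: "slot N c \<Longrightarrow> c \<in> Bd N"
  by (auto simp: slot_def Bd_mem)

lemma psi_nonslot[simp]: "\<not> slot N c \<Longrightarrow> psi N q c = q c"
  by (simp add: psi_def pse_nonslot)

lemma psinv_nonslot[simp]: "\<not> slot N c \<Longrightarrow> psinv N q c = q c"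
  by (simp add: psinv_def pie_nonslot)

lemma slot_simps[simp]: "\<not> slot N Z1" "\<not> slot N Z2" "\<not> slot N (W k 2)" "\<not> slot N (W 0 0)" "\<not> slot N (W 0 1)"
  by (auto simp: slot_def)

lemma agree_W2:
  assumes "vars e \<subseteq> W2s m" "\<And>i. q (W i 2) = q' (W i 2)"
  shows "ev e q = ev e q'"
  by (rule ev_vars) (use assms in \<open>auto simp: W2s_def\<close>)

lemma psi_W2[simp]: "psi N q (W k 2) = q (W k 2)" by simp
lemma psinv_W2[simp]: "psinv N q (W k 2) = q (W k 2)" by simp

lemma Pe_psi: "ev (Pe k) (psi N q) = ev (Pe k) q"
  by (rule agree_W2[OF vars_Pe]) simp
lemma Qe_psi: "ev (Qe k) (psi N q) = ev (Qe k) q"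
  by (rule agree_W2[OF vars_Qe]) simp
lemma Pe_psinv: "ev (Pe k) (psinv N q) = ev (Pe k) q"
  by (rule agree_W2[OF vars_Pe]) simp
lemma Qe_psinv: "ev (Qe k) (psinv N q) = ev (Qe k) q"
  by (rule agree_W2[OF vars_Qe]) simp

lemma psi_s1: "1 \<le> j \<Longrightarrow> j \<le> N \<Longrightarrow> psi N q (W j 1) = q (W j 1) + ev (Pe (j - 1)) q"
  by (simp add: psi_def z1e_def)

lemma psi_s0: "2 \<le> j \<Longrightarrow> j \<le> N \<Longrightarrow>
   psi N q (W j 0) = q (W j 0) - ev (Qe (j - 2)) q - q Z2 * (q (W j 1) + ev (Pe (j - 1)) q)"
proof -
  assume a: "2 \<le> j" "j \<le> N"
  then have j1: "Suc (j - 2) = j - 1" "Suc (j - 1) = j" "Suc (Suc (j - 2)) = j" by auto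
  show ?thesis using a by (simp add: psi_def z2e_def z1e_def j1)
qed

lemma psinv_s1: "1 \<le> j \<Longrightarrow> j \<le> N \<Longrightarrow> psinv N q (W j 1) = q (W j 1) - ev (Pe (j - 1)) q"
  by (simp add: psinv_def)

lemma psinv_s0: "2 \<le> j \<Longrightarrow> j \<le> N \<Longrightarrow>
   psinv N q (W j 0) = q (W j 0) + ev (Qe (j - 2)) q + q Z2 * q (W j 1)"
  by (simp add: psinv_def)

lemma psinv_psi: "psinv N (psi N q) = q"
proof
  fix c
  show "psinv N (psi N q) c = q c"
  proof (cases "slot N c")
    case True
    then obtain j where "(c = W j 1 \<and> 1 \<le> j \<and> j \<le> N) \<or> (c = W j 0 \<and> 2 \<le> j \<and> j \<le> N)"
      unfolding slot_def by blast
    then show ?thesis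
    proof
      assume h: "c = W j 1 \<and> 1 \<le> j \<and> j \<le> N"
      then show ?thesis using psinv_s1[of j N "psi N q"] psi_s1[of j N q] Pe_psi[of "j - 1" N q] by simp
    next
      assume h: "c = W j 0 \<and> 2 \<le> j \<and> j \<le> N"
      then show ?thesis using psinv_s0[of j N "psi N q"] psi_s0[of j N q] psi_s1[of j N q] Pe_psi[of "j - 1" N q] Qe_psi[of "j - 2" N q] by simp
    qed
  qed simp
qed

lemma psi_psinv: "psi N (psinv N v) = v"
proof
  fix c
  show "psi N (psinv N v) c = v c"
  proof (cases "slot N c")
    case True
    then obtain j where "(c = W j 1 \<and> 1 \<le> j \<and> j \<le> N) \<or> (c = W j 0 \<and> 2 \<le> j \<and> j \<le> N)"
      unfolding slot_def by blast
    then show ?thesis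
    proof
      assume h: "c = W j 1 \<and> 1 \<le> j \<and> j \<le> N"
      then show ?thesis using psinv_s1[of j N v] psi_s1[of j N "psinv N v"] Pe_psinv[of "j - 1" N v] by simp
    next
      assume h: "c = W j 0 \<and> 2 \<le> j \<and> j \<le> N"
      then show ?thesis using psinv_s0[of j N v] psi_s0[of j N "psinv N v"] psinv_s1[of j N v] Pe_psinv[of "j - 1" N v] Qe_psinv[of "j - 2" N v] by simp
    qed
  qed simp
qed

lemma psi_U0: "psi N q \<in> U0 \<longleftrightarrow> q \<in> U0" by (simp add: U0_def)
lemma psinv_U0: "psinv N q \<in> U0 \<longleftrightarrow> q \<in> U0" by (simp add: U0_def)

lemma psi_cont: "continuous_on U0 (psi N)"
  unfolding psi_def by (intro continuous_on_coordinatewise_then_product ev_cont)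

lemma psinv_cont: "continuous_on U0 (psinv N)"
  unfolding psinv_def by (intro continuous_on_coordinatewise_then_product ev_cont)

lemma vars_pse: "c \<in> Bd N \<Longrightarrow> vars (pse N c) \<subseteq> Bd N"
proof -
  assume c: "c \<in> Bd N"
  show ?thesis
  proof (cases "slot N c")
    case True
    then obtain j where "(c = W j 1 \<and> 1 \<le> j \<and> j \<le> N) \<or> (c = W j 0 \<and> 2 \<le> j \<and> j \<le> N)"
      unfolding slot_def by blast
    then show ?thesis
    proof
      assume h: "c = W j 1 \<and> 1 \<le> j \<and> j \<le> N"
      have "vars (z1e (j - 1)) \<subseteq> Bd N" by (rule subset_trans[OF vars_z1e Bd_mono]) (use h in arith)
      then show ?thesis using h by simp
    next
      assume h: "c = W j 0 \<and> 2 \<le> j \<and> j \<le> N"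
      have "vars (z2e (j - 2)) \<subseteq> Bd N" by (rule subset_trans[OF vars_z2e Bd_mono]) (use h in arith)
      then show ?thesis using h by simp
    qed
  next
    case False then show ?thesis using c by (simp add: pse_nonslot)
  qed
qed

lemma vars_pie: "c \<in> Bd N \<Longrightarrow> vars (pie N c) \<subseteq> Bd N"
proof -
  assume c: "c \<in> Bd N"
  show ?thesis
  proof (cases "slot N c")
    case True
    then obtain j where "(c = W j 1 \<and> 1 \<le> j \<and> j \<le> N) \<or> (c = W j 0 \<and> 2 \<le> j \<and> j \<le> N)"
      unfolding slot_def by blast
    then show ?thesis
    proof
      assume h: "c = W j 1 \<and> 1 \<le> j \<and> j \<le> N"
      have "vars (Pe (j - 1)) \<subseteq> Bd N"
        by (rule subset_trans[OF vars_Pe subset_trans[OF W2s_Bd Bd_mono]]) (use h in arith)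
      then show ?thesis using h c by simp
    next
      assume h: "c = W j 0 \<and> 2 \<le> j \<and> j \<le> N"
      have "vars (Qe (j - 2)) \<subseteq> Bd N"
        by (rule subset_trans[OF vars_Qe subset_trans[OF W2s_Bd Bd_mono]]) (use h in arith)
      moreover have "W j 1 \<in> Bd N" "Z2 \<in> Bd N" using h by (auto simp: Bd_mem)
      ultimately show ?thesis using h c by simp
    qed
  next
    case False then show ?thesis using c by (simp add: pie_nonslot)
  qed
qed

lemma pse_out: "c \<notin> Bd N \<Longrightarrow> pse N c = Var c"
  using slot_Bd pse_nonslot by blast
lemma pie_out: "c \<notin> Bd N \<Longrightarrow> pie N c = Var c"
  using slot_Bd pie_nonslot by blast

lemma emap_chain:
  fixes g :: "(coord \<Rightarrow> real) \<Rightarrow> real" and E :: "coord \<Rightarrow> ex"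
  assumes "finite K" "\<And>c. c \<notin> K \<Longrightarrow> E c = Var c" "open Ob" "(\<lambda>c. ev (E c) v) \<in> Ob" "v \<in> U0"
    "\<And>c. continuous_on Ob (pd c g)" "\<And>c p. p \<in> Ob \<Longrightarrow> (\<lambda>t. g (p(c:=t))) differentiable (at (p c))"
  shows "((\<lambda>t. g (\<lambda>c. ev (E c) (v(y:=t)))) has_real_derivative
          (\<Sum>c\<in>insert y K. pd c g (\<lambda>c. ev (E c) v) * ev (ds y (E c)) v)) (at (v y))"
proof -
  have "((\<lambda>t. g (\<lambda>c. ev (E c) (v(y:=t)))) has_real_derivative
     (\<Sum>c\<in>insert y K. pd c g (\<lambda>c. ev (E c) (v(y := v y))) * ev (ds y (E c)) v)) (at (v y))"
  proof (rule curve_chain[where \<gamma> = "\<lambda>t c. ev (E c) (v(y:=t))"])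
    show "(\<lambda>c. ev (E c) (v(y := v y))) \<in> Ob" using assms(4) by simp
    show "ev (E x) (v(y := t)) = ev (E x) (v(y := v y))" if "x \<notin> insert y K" for t x
      using that assms(2)[of x] by simp
    show "((\<lambda>t. ev (E x) (v(y := t))) has_real_derivative ev (ds y (E x)) v) (at (v y))" for x
      using ev_deriv assms(5) by (simp add: U0_def)
    show "finite (insert y K)" using assms(1) by simp
    show "open Ob" by (rule assms(3))
    show "continuous_on Ob (pd c g)" if "c \<in> insert y K" for c by (rule assms(6))
    show "(\<lambda>t. g (p(c := t))) differentiable (at (p c))" if "c \<in> insert y K" "p \<in> Ob" for c p
      by (rule assms(7)[OF that(2)])
  qed
  then show ?thesis by simp
qed

locale setting =
  fixes N :: nat and U :: "(coord \<Rightarrow> real) set" and \<alpha> :: "(coord \<Rightarrow> real) \<Rightarrow> real"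
  assumes openU: "open U" and UU0: "U \<subseteq> U0" and dep: "depends_upto N \<alpha>" and sm: "smooth_on U \<alpha>"
begin

definition G where "G v = \<alpha> (psinv N v)"
definition BU where "BU = {v \<in> U0. psinv N v \<in> U}"

lemma open_BU: "open BU"
proof -
  have "\<forall>B. open B \<longrightarrow> open (psinv N -` B \<inter> U0)"
    using continuous_on_open_vimage[OF open_U0, of "psinv N"] psinv_cont[of N] by simp
  then have "open (psinv N -` U \<inter> U0)" using openU by simp
  moreover have "BU = psinv N -` U \<inter> U0" unfolding BU_def by auto
  ultimately show ?thesis by simp
qed

lemma BU_U0: "BU \<subseteq> U0" unfolding BU_def by auto

lemma G_deriv:
  assumes "v \<in> BU"
  shows "((\<lambda>t. G (v(y:=t))) has_real_derivative
     (\<Sum>c\<in>insert y (Bd N). pd c \<alpha> (psinv N v) * ev (ds y (pie N c)) v)) (at (v y))"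
  unfolding G_def psinv_def
proof (rule emap_chain)
  show "(\<lambda>c. ev (pie N c) v) \<in> U" using assms by (simp add: BU_def psinv_def)
  show "v \<in> U0" using assms by (simp add: BU_def)
  show "continuous_on U (pd c \<alpha>)" for c by (rule smooth_pd_cont[OF sm])
  show "(\<lambda>t. \<alpha> (p(c:=t))) differentiable (at (p c))" if "p \<in> U" for c p
    by (rule smooth_diff[OF sm that])
qed (simp_all add: openU pie_out)

lemma G_pd: "v \<in> BU \<Longrightarrow> pd y G v = (\<Sum>c\<in>insert y (Bd N). pd c \<alpha> (psinv N v) * ev (ds y (pie N c)) v)"
  using DERIV_imp_deriv[OF G_deriv] by (simp only: pd_def[of y G v])

lemma G_diff: "v \<in> BU \<Longrightarrow> (\<lambda>t. G (v(y:=t))) differentiable (at (v y))"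
  unfolding real_differentiable_def by (rule exI, rule G_deriv)

lemma G_pd_cont: "continuous_on BU (pd y G)"
proof -
  have c1: "continuous_on BU (\<lambda>v. pd c \<alpha> (psinv N v))" for c
  proof (rule continuous_on_compose2[OF smooth_pd_cont[OF sm]])
    show "continuous_on BU (psinv N)" by (rule continuous_on_subset[OF psinv_cont BU_U0])
    show "psinv N ` BU \<subseteq> U" by (auto simp: BU_def)
  qed
  have c2: "continuous_on BU (ev e)" for e by (rule continuous_on_subset[OF ev_cont BU_U0])
  have "continuous_on BU (\<lambda>v. \<Sum>c\<in>insert y (Bd N). pd c \<alpha> (psinv N v) * ev (ds y (pie N c)) v)"
    by (intro continuous_on_sum continuous_on_mult c1 c2)
  moreover have "continuous_on BU (pd y G) = continuous_on BU (\<lambda>v. \<Sum>c\<in>insert y (Bd N). pd c \<alpha> (psinv N v) * ev (ds y (pie N c)) v)"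
    by (rule continuous_on_cong[OF refl]) (rule G_pd)
  ultimately show ?thesis by simp
qed

lemma alpha_G: "\<alpha> q = G (psi N q)"
  by (simp add: G_def psinv_psi)

lemma psi_BU: "u \<in> U \<Longrightarrow> psi N u \<in> BU"
  using UU0 by (auto simp: BU_def psinv_psi psi_U0)

lemma alpha_pd_G:
  assumes "u \<in> U"
  shows "pd x \<alpha> u = (\<Sum>c\<in>insert x (Bd N). pd c G (psi N u) * ev (ds x (pse N c)) u)"
proof -
  have "pd x \<alpha> u = pd x (\<lambda>q. G (psi N q)) u"
    by (rule pd_local[OF openU assms]) (simp add: alpha_G)
  moreover have D: "((\<lambda>t. G (psi N (u(x:=t)))) has_real_derivative
     (\<Sum>c\<in>insert x (Bd N). pd c G (psi N u) * ev (ds x (pse N c)) u)) (at (u x))"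
    unfolding psi_def
  proof (rule emap_chain)
    show "(\<lambda>c. ev (pse N c) u) \<in> BU" using psi_BU[OF assms] by (simp add: psi_def)
    show "u \<in> U0" using assms UU0 by auto
    show "continuous_on BU (pd c G)" for c by (rule G_pd_cont)
    show "(\<lambda>t. G (p(c:=t))) differentiable (at (p c))" if "p \<in> BU" for c p
      by (rule G_diff[OF that])
  qed (simp_all add: open_BU pse_out)
  then have "pd x (\<lambda>q. G (psi N q)) u = (\<Sum>c\<in>insert x (Bd N). pd c G (psi N u) * ev (ds x (pse N c)) u)"
    unfolding pd_def[of x "\<lambda>q. G (psi N q)" u] by (rule DERIV_imp_deriv)
  ultimately show ?thesis by simp
qed

lemma coef_ev: "u \<in> U0 \<Longrightarrow> ev (D2s (pse N c)) u = (if slot N c then 0 else ev (d2v c) u)"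
proof (cases "slot N c")
  case True
  assume u: "u \<in> U0"
  from True obtain j where "(c = W j 1 \<and> 1 \<le> j \<and> j \<le> N) \<or> (c = W j 0 \<and> 2 \<le> j \<and> j \<le> N)"
    unfolding slot_def by blast
  then show ?thesis using True D2s_z1e[OF u] D2s_z2e[OF u] by auto
next
  case False then show ?thesis by (simp add: pse_nonslot)
qed

lemma E_general:
  assumes "u \<in> U"
  shows "hatD2 N \<alpha> u = (\<Sum>c\<in>Bd N. pd c G (psi N u) * (if slot N c then 0 else ev (d2v c) u))"
proof -
  have u0: "u \<in> U0" using assms UU0 by auto
  have XB: "insert Z2 (XS N) \<subseteq> Bd N" by (auto simp: Bd_def)
  have ins: "x \<in> insert Z2 (XS N) \<Longrightarrow> insert x (Bd N) = Bd N" for x using XB by blast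
  have "hatD2 N \<alpha> u = (\<Sum>x\<in>insert Z2 (XS N). D2c x u * pd x \<alpha> u)" by (rule hatD2_sum)
  also have "\<dots> = (\<Sum>x\<in>insert Z2 (XS N). \<Sum>c\<in>Bd N. pd c G (psi N u) * (D2c x u * ev (ds x (pse N c)) u))"
    by (rule sum.cong[OF refl]) (simp only: alpha_pd_G[OF assms] ins sum_distrib_left mult.left_commute)
  also have "\<dots> = (\<Sum>c\<in>Bd N. pd c G (psi N u) * (\<Sum>x\<in>insert Z2 (XS N). D2c x u * ev (ds x (pse N c)) u))"
    by (subst sum.swap) (simp only: sum_distrib_left)
  also have "\<dots> = (\<Sum>c\<in>Bd N. pd c G (psi N u) * ev (D2s (pse N c)) u)"
    by (rule sum.cong[OF refl]) (simp only: D2_sum_ev[OF u0 vars_pse])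
  also have "\<dots> = (\<Sum>c\<in>Bd N. pd c G (psi N u) * (if slot N c then 0 else ev (d2v c) u))"
    by (rule sum.cong[OF refl]) (simp add: coef_ev[OF u0])
  finally show ?thesis .
qed

end

definition box :: "coord set \<Rightarrow> real \<Rightarrow> (coord \<Rightarrow> real) \<Rightarrow> (coord \<Rightarrow> real) set" where
  "box C e v0 = {v. \<forall>c\<in>C. \<bar>v c - v0 c\<bar> < e}"

lemma open_box: "finite C \<Longrightarrow> open (box C e v0)"
proof -
  assume fC: "finite C"
  have "open {f. \<forall>i\<in>C. f (id i) \<in> {v0 i - e <..< v0 i + e}}"
    by (rule product_topology_basis'[OF fC]) auto
  moreover have "{f. \<forall>i\<in>C. f (id i) \<in> {v0 i - e <..< v0 i + e}} = box C e v0"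
    unfolding box_def by (auto simp: abs_less_iff)
  ultimately show ?thesis by simp
qed

lemma box_mix: "v \<in> box C e v0 \<Longrightarrow> w \<in> box C e v0 \<Longrightarrow> (\<lambda>x. if P x then v x else w x) \<in> box C e v0"
  unfolding box_def by auto

lemma box_upd_iff: "v \<in> box C e v0 \<Longrightarrow> v(c := s) \<in> box C e v0 \<longleftrightarrow> (c \<in> C \<longrightarrow> \<bar>s - v0 c\<bar> < e)"
  unfolding box_def by auto

lemma box_seg:
  assumes "v \<in> box C e v0" "v(c := t) \<in> box C e v0" "s \<in> closed_segment (v c) t"
  shows "v(c := s) \<in> box C e v0"
proof -
  have "c \<in> C \<longrightarrow> \<bar>t - v0 c\<bar> < e" using box_upd_iff[OF assms(1)] assms(2) by simp
  moreover have "c \<in> C \<longrightarrow> \<bar>v c - v0 c\<bar> < e" using assms(1) by (simp add: box_def)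
  ultimately have "c \<in> C \<longrightarrow> \<bar>s - v0 c\<bar> < e"
    using assms(3) by (auto simp: closed_segment_eq_real_ivl abs_less_iff split: if_splits)
  then show ?thesis using box_upd_iff[OF assms(1)] by simp
qed

lemma poly_zero:
  fixes a b c t0 :: real
  assumes "\<forall>\<^sub>F t in nhds t0. a + b * t + c * t^2 = 0"
  shows "b = 0 \<and> c = 0"
proof -
  from assms obtain d where d: "d > 0" "\<And>t. dist t t0 < d \<Longrightarrow> a + b * t + c * t^2 = 0"
    unfolding eventually_nhds_metric by blast
  define h where "h = d / 2"
  have h: "h > 0" "h < d" using d by (auto simp: h_def)
  have q0: "a + b * t0 + c * t0^2 = 0" using d by simp
  have q1: "a + b * (t0 + h) + c * (t0 + h)^2 = 0" using d h by (simp add: dist_real_def)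
  have q2: "a + b * (t0 - h) + c * (t0 - h)^2 = 0" using d h by (simp add: dist_real_def)
  have "(a + b * (t0 + h) + c * (t0 + h)^2) + (a + b * (t0 - h) + c * (t0 - h)^2) - 2 * (a + b * t0 + c * t0^2) = 2 * c * h^2"
    by (simp add: algebra_simps power2_eq_square)
  then have "2 * c * h^2 = 0" using q0 q1 q2 by simp
  then have c0: "c = 0" using h by simp
  have "(a + b * (t0 + h) + c * (t0 + h)^2) - (a + b * (t0 - h) + c * (t0 - h)^2) = 2 * b * h + 4 * c * t0 * h"
    by (simp add: algebra_simps power2_eq_square)
  then have "2 * b * h + 4 * c * t0 * h = 0" using q1 q2 by linarith
  then have "2 * b * h = 0" using c0 by simp
  then show ?thesis using h c0 by simp
qed

context setting
begin

definition EqE where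
  "EqE v = pd Z2 G v + v (W 0 1) * pd (W 0 0) G v
     + (if 1 \<le> N then (v (W 1 1) - v (W 0 2) * v (W 0 2) / 2) * pd (W 1 0) G v else 0)
     + v (W 0 2) * pd (W 0 1) G v + (\<Sum>k\<le>N. ev (w3e k) v * pd (W k 2) G v)"

lemma sum_Bd: "(\<Sum>c\<in>Bd N. f c) = f Z1 + f Z2 + (\<Sum>k\<le>N. f (W k 0) + f (W k 1) + (f (W k 2) :: real))"
proof -
  have "(\<Sum>c\<in>Bd N. f c) = f Z1 + (f Z2 + (\<Sum>c\<in>XS N. f c))"
    unfolding Bd_def by (subst sum.insert; simp)+
  also have "(\<Sum>c\<in>XS N. f c) = (\<Sum>k\<le>N. \<Sum>l\<le>(2::nat). f (W k l))" by (rule sum_XS[symmetric])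
  finally show ?thesis by (simp add: sum_le2)
qed

lemma w3e_psinv: "ev (w3e k) (psinv N v) = ev (w3e k) v"
  by (rule agree_W2[OF vars_w3e]) simp

lemma EqE_eq:
  "(\<Sum>c\<in>Bd N. pd c G v * (if slot N c then 0 else ev (d2v c) (psinv N v))) = EqE v"
proof -
  define T where "T c = pd c G v * (if slot N c then 0 else ev (d2v c) (psinv N v))" for c
  have k: "T (W k 0) + T (W k 1) + T (W k 2) =
     (if k = 0 then v (W 0 1) * pd (W 0 0) G v + v (W 0 2) * pd (W 0 1) G v else 0)
     + (if k = 1 then (v (W 1 1) - v (W 0 2) * v (W 0 2) / 2) * pd (W 1 0) G v else 0)
     + ev (w3e k) v * pd (W k 2) G v" if "k \<le> N" for k
  proof -
    have t2: "T (W k 2) = ev (w3e k) v * pd (W k 2) G v" by (simp add: T_def w3e_psinv)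
    consider "k = 0" | "k = 1" | "2 \<le> k" by linarith
    then show ?thesis
    proof cases
      case 1
      have "\<not> slot N (W 0 1)" "\<not> slot N (W 0 0)" by (auto simp: slot_def)
      then have "T (W 0 0) = v (W 0 1) * pd (W 0 0) G v" "T (W 0 1) = v (W 0 2) * pd (W 0 1) G v"
        by (simp_all add: T_def)
      then show ?thesis using t2 1 by simp
    next
      case 2
      have "slot N (W 1 1)" "\<not> slot N (W 1 0)" using that 2 by (auto simp: slot_def)
      moreover have "psinv N v (W 1 1) = v (W 1 1) - v (W 0 2) * v (W 0 2) / 2"
        using psinv_s1[of 1 N v] that 2 by simp
      ultimately show ?thesis using t2 2 by (simp add: T_def)
    next
      case 3
      have "slot N (W k 1)" "slot N (W k 0)" using that 3 by (auto simp: slot_def)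
      then show ?thesis using t2 3 by (simp add: T_def)
    qed
  qed
  have "(\<Sum>c\<in>Bd N. T c) = T Z1 + T Z2 + (\<Sum>k\<le>N. T (W k 0) + T (W k 1) + T (W k 2))"
    by (rule sum_Bd)
  also have "(\<Sum>k\<le>N. T (W k 0) + T (W k 1) + T (W k 2)) =
     (\<Sum>k\<le>N. (if k = 0 then v (W 0 1) * pd (W 0 0) G v + v (W 0 2) * pd (W 0 1) G v else 0)
     + (if k = 1 then (v (W 1 1) - v (W 0 2) * v (W 0 2) / 2) * pd (W 1 0) G v else 0)
     + ev (w3e k) v * pd (W k 2) G v)"
    by (rule sum.cong[OF refl], rule k, simp)
  also have "\<dots> = (v (W 0 1) * pd (W 0 0) G v + v (W 0 2) * pd (W 0 1) G v)
     + (if 1 \<le> N then (v (W 1 1) - v (W 0 2) * v (W 0 2) / 2) * pd (W 1 0) G v else 0)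
     + (\<Sum>k\<le>N. ev (w3e k) v * pd (W k 2) G v)"
    by (simp add: sum.distrib)
  finally show ?thesis unfolding T_def[symmetric] EqE_def by (simp add: T_def)
qed

end

context setting
begin

lemma G_dep: "depends_upto N G"
  unfolding depends_upto_def
proof (intro allI impI)
  fix p q :: "coord \<Rightarrow> real"
  assume h: "p Z1 = q Z1 \<and> p Z2 = q Z2 \<and> (\<forall>k l. k \<le> N \<and> l \<le> 2 \<longrightarrow> p (W k l) = q (W k l))"
  then have agree: "\<And>c. c \<in> Bd N \<Longrightarrow> p c = q c" by (auto simp: Bd_mem)
  have pc: "psinv N p c = psinv N q c" if "c \<in> Bd N" for c
    unfolding psinv_def by (rule ev_vars) (use vars_pie[OF that] agree in blast)
  have "psinv N p Z1 = psinv N q Z1" by (rule pc) (simp add: Bd_def)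
  moreover have "psinv N p Z2 = psinv N q Z2" by (rule pc) (simp add: Bd_def)
  moreover have "\<forall>k l. k \<le> N \<and> l \<le> 2 \<longrightarrow> psinv N p (W k l) = psinv N q (W k l)"
    by (auto intro!: pc simp: Bd_mem)
  ultimately have "psinv N p Z1 = psinv N q Z1 \<and> psinv N p Z2 = psinv N q Z2 \<and>
      (\<forall>k l. k \<le> N \<and> l \<le> 2 \<longrightarrow> psinv N p (W k l) = psinv N q (W k l))"
    by blast
  then show "G p = G q" using dep unfolding depends_upto_def G_def by blast
qed

lemma pd_G_out: "c \<notin> Bd N \<Longrightarrow> pd c G v = 0"
  by (rule pd_irrel[OF G_dep])

end

locale boxsetting = setting +
  fixes C :: "coord set" and e :: real and v0 :: "coord \<Rightarrow> real"
  assumes finC: "finite C" and Bsub: "box C e v0 \<subseteq> BU" and hz: "\<forall>p\<in>U. hatD2 N \<alpha> p = 0"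
begin

abbreviation "B \<equiv> box C e v0"

lemma B_U0: "v \<in> B \<Longrightarrow> v \<in> U0" using Bsub BU_U0 by blast

lemma EqE_zero: "v \<in> B \<Longrightarrow> EqE v = 0"
proof -
  assume v: "v \<in> B"
  then have vb: "v \<in> BU" using Bsub by blast
  then have u: "psinv N v \<in> U" by (simp add: BU_def)
  have "hatD2 N \<alpha> (psinv N v) = EqE v"
    using E_general[OF u] EqE_eq by (simp add: psi_psinv)
  then show ?thesis using hz u by simp
qed

lemma G_const_line:
  assumes "\<forall>w\<in>B. pd c G w = 0" "v \<in> B" "v(c:=t) \<in> B"
  shows "G (v(c:=t)) = G v"
proof -
  define S where "S = closed_segment (v c) t"
  have der: "((\<lambda>s. G (v(c:=s))) has_real_derivative 0) (at s within S)" if "s \<in> S" for s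
  proof -
    have w: "v(c:=s) \<in> B" using box_seg[OF assms(2,3)] that by (simp add: S_def)
    then have "v(c:=s) \<in> BU" using Bsub by blast
    from G_diff[OF this, of c] have "((\<lambda>u. G ((v(c:=s))(c:=u))) has_real_derivative pd c G (v(c:=s))) (at ((v(c:=s)) c))"
      by (rule pd_deriv)
    then have "((\<lambda>u. G (v(c:=u))) has_real_derivative 0) (at s)" using assms(1) w by simp
    then show ?thesis by (rule has_field_derivative_at_within)
  qed
  have cS: "convex S" unfolding S_def by (rule convex_closed_segment)
  from has_field_derivative_zero_constant[OF cS der]
  obtain K where K: "\<forall>x\<in>S. G (v(c:=x)) = K" by blast
  have "v c \<in> S" "t \<in> S" by (auto simp: S_def)
  then show ?thesis using K by (metis fun_upd_triv)
qed

lemma pd_after_const: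
  assumes "\<forall>w\<in>B. pd d G w = 0" "v \<in> B" "v(d:=t) \<in> B" "c \<noteq> d"
  shows "pd c G (v(d:=t)) = pd c G v"
proof -
  have ev: "\<forall>\<^sub>F s in nhds (v c). v(c := s) \<in> B" by (rule upd_eventually[OF open_box[OF finC] assms(2)])
  have dd: "d \<in> C \<longrightarrow> \<bar>t - v0 d\<bar> < e" using box_upd_iff[OF assms(2)] assms(3) by simp
  have "\<forall>\<^sub>F s in nhds (v c). G ((v(d:=t))(c := s)) = G (v(c := s))"
    using ev
  proof eventually_elim
    case (elim s)
    have "(v(c:=s))(d:=t) \<in> B" using box_upd_iff[OF elim] dd by simp
    then have "G ((v(c:=s))(d:=t)) = G (v(c:=s))" by (rule G_const_line[OF assms(1) elim])
    moreover have "(v(d:=t))(c := s) = (v(c:=s))(d:=t)" using assms(4) by (simp add: fun_upd_twist)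
    ultimately show ?case by simp
  qed
  then have "deriv (\<lambda>s. G ((v(d:=t))(c := s))) (v c) = deriv (\<lambda>s. G (v(c := s))) (v c)"
    by (rule deriv_cong_ev[OF _ refl])
  then show ?thesis unfolding pd_def using assms(4) by simp
qed

end

context boxsetting
begin

lemma step_b1:
  assumes j: "j \<le> N" and H: "\<And>k. k > j \<Longrightarrow> \<forall>w\<in>B. pd (W k 2) G w = 0" and v: "v \<in> B"
  shows "pd (W j 2) G v = 0"
proof -
  define d where "d = W (Suc j) 2"
  have Hd: "\<forall>w\<in>B. pd d G w = 0" unfolding d_def by (rule H) simp
  define g where "g = pd (W j 2) G v"
  have v0: "v \<in> U0" by (rule B_U0[OF v])
  have evB: "\<forall>\<^sub>F t in nhds (v d). v(d := t) \<in> B" by (rule upd_eventually[OF open_box[OF finC] v])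
  have key: "EqE (v(d:=t)) = EqE v + (ev (w3e j) (v(d:=t)) - ev (w3e j) v) * g" if vt: "v(d:=t) \<in> B" for t
  proof -
    have pdeq: "pd c G (v(d:=t)) = pd c G v" if "c \<noteq> d" for c
      by (rule pd_after_const[OF Hd v vt that])
    have coord: "(v(d:=t)) (W 0 1) = v (W 0 1)" "(v(d:=t)) (W 0 2) = v (W 0 2)" "(v(d:=t)) (W 1 1) = v (W 1 1)"
      by (simp_all add: d_def)
    have trm: "ev (w3e k) (v(d:=t)) * pd (W k 2) G (v(d:=t)) =
       ev (w3e k) v * pd (W k 2) G v + (if k = j then (ev (w3e j) (v(d:=t)) - ev (w3e j) v) * g else 0)" for k
    proof -
      consider "k < j" | "k = j" | "k > j" by linarith
      then show ?thesis
      proof cases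
        case 1
        have "ev (w3e k) (v(d:=t)) = ev (w3e k) v"
        proof (rule ev_vars)
          fix c assume "c \<in> vars (w3e k)"
          then have "c \<in> W2s (Suc k)" using vars_w3e by blast
          then have "c \<noteq> d" using 1 by (auto simp: W2s_def d_def)
          then show "(v(d:=t)) c = v c" by simp
        qed
        moreover have "pd (W k 2) G (v(d:=t)) = pd (W k 2) G v" by (rule pdeq) (use 1 in \<open>simp add: d_def\<close>)
        ultimately show ?thesis using 1 by simp
      next
        case 2
        have "pd (W k 2) G (v(d:=t)) = g" unfolding g_def using pdeq[of "W j 2"] 2 by (simp add: d_def)
        then show ?thesis using 2 by (simp add: g_def algebra_simps)
      next
        case 3
        have "pd (W k 2) G (v(d:=t)) = 0" "pd (W k 2) G v = 0" using H[OF 3] vt v by auto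
        then show ?thesis using 3 by simp
      qed
    qed
    have sumeq: "(\<Sum>k\<le>N. ev (w3e k) (v(d:=t)) * pd (W k 2) G (v(d:=t))) =
       (\<Sum>k\<le>N. ev (w3e k) v * pd (W k 2) G v) + (ev (w3e j) (v(d:=t)) - ev (w3e j) v) * g"
      using j by (simp add: trm sum.distrib)
    have "W 0 0 \<noteq> d" "W 1 0 \<noteq> d" "W 0 1 \<noteq> d" "Z2 \<noteq> d" by (simp_all add: d_def)
    then show ?thesis unfolding EqE_def using sumeq coord by (simp add: pdeq)
  qed
  define \<phi> where "\<phi> = (\<lambda>t. EqE v + (ev (w3e j) (v(d:=t)) - ev (w3e j) v) * g)"
  have ev0: "\<forall>\<^sub>F t in nhds (v d). \<phi> t = 0"
    using evB by eventually_elim (simp add: \<phi>_def key[symmetric] EqE_zero)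
  have D: "(\<phi> has_real_derivative (ev (ds d (w3e j)) v * g)) (at (v d))"
  proof -
    have "((\<lambda>t. ev (w3e j) (v(d:=t))) has_real_derivative ev (ds d (w3e j)) v) (at (v d))"
      using ev_deriv v0 by (simp add: U0_def)
    then have "((\<lambda>t. EqE v + (ev (w3e j) (v(d:=t)) - ev (w3e j) v) * g) has_real_derivative
        0 + (ev (ds d (w3e j)) v - 0) * g) (at (v d))"
      by (intro DERIV_add[OF DERIV_const] DERIV_cmult_right DERIV_diff[OF _ DERIV_const])
    then show ?thesis by (simp add: \<phi>_def)
  qed
  have "((\<lambda>t. 0) has_real_derivative (ev (ds d (w3e j)) v * g)) (at (v d))"
    using DERIV_cong_ev[OF refl ev0 refl] D by simp
  then have "ev (ds d (w3e j)) v * g = 0" using DERIV_const DERIV_unique by blast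
  moreover have "ev (ds d (w3e j)) v = - inverse (v (W 0 2))" unfolding d_def by (rule w3_top)
  moreover have "v (W 0 2) \<noteq> 0" using v0 by (simp add: U0_def)
  ultimately show ?thesis by (simp add: g_def)
qed

lemma step_b_all: "\<forall>v\<in>B. pd (W j 2) G v = 0"
proof -
  have "\<forall>j. N < j + m \<longrightarrow> (\<forall>v\<in>B. pd (W j 2) G v = 0)" for m
  proof (induction m)
    case 0
    show ?case
    proof (intro allI impI ballI)
      fix j v assume "N < j + 0"
      then have "W j 2 \<notin> Bd N" by (simp add: Bd_mem)
      then show "pd (W j 2) G v = 0" by (rule pd_G_out)
    qed
  next
    case (Suc m)
    show ?case
    proof (intro allI impI ballI)
      fix j v assume jm: "N < j + Suc m" and v: "v \<in> B"
      show "pd (W j 2) G v = 0"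
      proof (cases "N < j + m")
        case True then show ?thesis using Suc.IH v by blast
      next
        case False
        then have jN: "j \<le> N" using jm by simp
        show ?thesis
        proof (rule step_b1[OF jN _ v])
          fix k assume "k > j"
          then have "N < k + m" using False jm by simp
          then show "\<forall>w\<in>B. pd (W k 2) G w = 0" using Suc.IH by blast
        qed
      qed
    qed
  qed
  from this[of "Suc N"] show ?thesis by simp
qed

end

context boxsetting
begin

lemma EqE_red:
  assumes "w \<in> B"
  shows "EqE w = pd Z2 G w + w (W 0 1) * pd (W 0 0) G w
     + (if 1 \<le> N then (w (W 1 1) - w (W 0 2) * w (W 0 2) / 2) * pd (W 1 0) G w else 0)
     + w (W 0 2) * pd (W 0 1) G w"
  using step_b_all assms unfolding EqE_def by simp

lemma step_b2:
  assumes v: "v \<in> B"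
  shows "pd (W 0 1) G v = 0 \<and> pd (W 1 0) G v = 0"
proof -
  define d where "d = W 0 2"
  have Hd: "\<forall>w\<in>B. pd d G w = 0" unfolding d_def by (rule step_b_all)
  have evB: "\<forall>\<^sub>F t in nhds (v d). v(d := t) \<in> B" by (rule upd_eventually[OF open_box[OF finC] v])
  define a where "a = pd Z2 G v + v (W 0 1) * pd (W 0 0) G v + (if 1 \<le> N then v (W 1 1) * pd (W 1 0) G v else 0)"
  define b where "b = pd (W 0 1) G v"
  define c where "c = (if 1 \<le> N then - pd (W 1 0) G v / 2 else 0)"
  have "\<forall>\<^sub>F t in nhds (v d). a + b * t + c * t^2 = 0"
    using evB
  proof eventually_elim
    case (elim t)
    have pdeq: "pd x G (v(d:=t)) = pd x G v" if "x \<noteq> d" for x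
      by (rule pd_after_const[OF Hd v elim that])
    have "W 0 0 \<noteq> d" "W 1 0 \<noteq> d" "W 0 1 \<noteq> d" "Z2 \<noteq> d" by (simp_all add: d_def)
    then have e1: "pd Z2 G (v(d:=t)) = pd Z2 G v" "pd (W 0 0) G (v(d:=t)) = pd (W 0 0) G v"
      "pd (W 1 0) G (v(d:=t)) = pd (W 1 0) G v" "pd (W 0 1) G (v(d:=t)) = pd (W 0 1) G v"
      using pdeq by blast+
    have "EqE (v(d:=t)) = a + b * t + c * t^2"
      unfolding EqE_red[OF elim] e1 a_def b_def c_def
      by (simp add: d_def power2_eq_square algebra_simps)
    then show ?case using EqE_zero[OF elim] by simp
  qed
  from poly_zero[OF this] have bc: "b = 0" "c = 0" by auto
  have "pd (W 1 0) G v = 0"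
  proof (cases "1 \<le> N")
    case True then show ?thesis using bc(2) by (simp add: c_def)
  next
    case False
    then have "W 1 0 \<notin> Bd N" by (simp add: Bd_mem)
    then show ?thesis by (rule pd_G_out)
  qed
  then show ?thesis using bc(1) by (simp add: b_def)
qed

lemma step_b3:
  assumes v: "v \<in> B"
  shows "pd (W 0 0) G v = 0 \<and> pd Z2 G v = 0"
proof -
  define d where "d = W 0 1"
  have Hd: "\<forall>w\<in>B. pd d G w = 0" unfolding d_def using step_b2 by blast
  have evB: "\<forall>\<^sub>F t in nhds (v d). v(d := t) \<in> B" by (rule upd_eventually[OF open_box[OF finC] v])
  have red: "EqE w = pd Z2 G w + w (W 0 1) * pd (W 0 0) G w" if "w \<in> B" for w
    using EqE_red[OF that] step_b2[OF that] by simp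
  define a where "a = pd Z2 G v"
  define b where "b = pd (W 0 0) G v"
  have "\<forall>\<^sub>F t in nhds (v d). a + b * t + 0 * t^2 = 0"
    using evB
  proof eventually_elim
    case (elim t)
    have pdeq: "pd x G (v(d:=t)) = pd x G v" if "x \<noteq> d" for x
      by (rule pd_after_const[OF Hd v elim that])
    have "W 0 0 \<noteq> d" "Z2 \<noteq> d" by (simp_all add: d_def)
    then have e1: "pd Z2 G (v(d:=t)) = pd Z2 G v" "pd (W 0 0) G (v(d:=t)) = pd (W 0 0) G v"
      using pdeq by blast+
    have "EqE (v(d:=t)) = a + b * t"
      unfolding red[OF elim] e1 a_def b_def by (simp add: d_def algebra_simps)
    then show ?case using EqE_zero[OF elim] by simp
  qed
  from poly_zero[OF this] have b0: "b = 0" by auto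
  then have "pd Z2 G v = 0" using red[OF v] EqE_zero[OF v] by (simp add: b_def)
  then show ?thesis using b0 by (simp add: b_def)
qed

lemma free_zero:
  assumes "c \<noteq> Z1" "\<not> slot N c" "v \<in> B"
  shows "pd c G v = 0"
proof (cases "c \<in> Bd N")
  case False then show ?thesis by (rule pd_G_out)
next
  case True
  then consider "c = Z2" | k l where "c = W k l" "k \<le> N" "l \<le> 2"
    using assms(1) by (auto simp: Bd_mem)
  then show ?thesis
  proof cases
    case 1 then show ?thesis using step_b3[OF assms(3)] by simp
  next
    case 2
    consider "l = 2" | "l = 1" | "l = 0" using 2(3) by linarith
    then show ?thesis
    proof cases
      case 1 then show ?thesis using step_b_all assms(3) 2 by simp
    next
      case 3
      then have "k = 0 \<or> k = 1" using assms(2) 2 by (auto simp: slot_def)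
      then show ?thesis using step_b3[OF assms(3)] step_b2[OF assms(3)] 2 3 by auto
    next
      case l1: 2
      then have "k = 0" using assms(2) 2 by (auto simp: slot_def)
      then show ?thesis using step_b2[OF assms(3)] 2 l1 by auto
    qed
  qed
qed

end

context boxsetting
begin

lemma G_const_free:
  assumes "finite D"
  shows "\<forall>c\<in>D. c \<noteq> Z1 \<and> \<not> slot N c \<Longrightarrow> w \<in> B \<Longrightarrow> w' \<in> B \<Longrightarrow> (\<forall>c. c \<notin> D \<longrightarrow> w c = w' c) \<Longrightarrow> G w = G w'"
  using assms
proof (induction D arbitrary: w rule: finite_induct)
  case empty
  then have "w = w'" by auto
  then show ?case by simp
next
  case (insert c D)
  define w1 where "w1 = w(c := w' c)"
  have cfree: "c \<noteq> Z1" "\<not> slot N c" using insert.prems(1) by auto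
  have "c \<in> C \<longrightarrow> \<bar>w' c - v0 c\<bar> < e" using insert.prems(3) by (simp add: box_def)
  then have w1B: "w1 \<in> B" unfolding w1_def using box_upd_iff[OF insert.prems(2)] by simp
  have z: "\<forall>u\<in>B. pd c G u = 0" using free_zero[OF cfree] by blast
  have "G w1 = G w" unfolding w1_def by (rule G_const_line[OF z insert.prems(2)]) (use w1B w1_def in simp)
  moreover have "G w1 = G w'"
  proof (rule insert.IH)
    show "\<forall>c\<in>D. c \<noteq> Z1 \<and> \<not> slot N c" using insert.prems(1) by auto
    show "w1 \<in> B" by (rule w1B)
    show "w' \<in> B" by (rule insert.prems(3))
    show "\<forall>x. x \<notin> D \<longrightarrow> w1 x = w' x" using insert.prems(4) by (auto simp: w1_def)
  qed
  ultimately show ?case by simp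
qed

lemma G_const:
  assumes "w \<in> B" "w' \<in> B" "w Z1 = w' Z1" "\<And>c. slot N c \<Longrightarrow> w c = w' c"
  shows "G w = G w'"
proof -
  define w'' where "w'' = (\<lambda>x. if x \<in> Bd N then w' x else w x)"
  have w''B: "w'' \<in> B" unfolding w''_def by (rule box_mix[OF assms(2,1)])
  have a1: "w'' Z1 = w' Z1 \<and> w'' Z2 = w' Z2 \<and> (\<forall>k l. k \<le> N \<and> l \<le> 2 \<longrightarrow> w'' (W k l) = w' (W k l))"
    by (auto simp: w''_def Bd_mem)
  have "G w'' = G w'"
    by (rule G_dep[unfolded depends_upto_def, rule_format, OF a1])
  moreover have "G w = G w''"
  proof (rule G_const_free[of "{x \<in> Bd N. w x \<noteq> w' x}"])
    show "finite {x \<in> Bd N. w x \<noteq> w' x}" by simp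
    show "\<forall>c\<in>{x \<in> Bd N. w x \<noteq> w' x}. c \<noteq> Z1 \<and> \<not> slot N c" using assms(3,4) by auto
    show "\<forall>c. c \<notin> {x \<in> Bd N. w x \<noteq> w' x} \<longrightarrow> w c = w'' c" by (auto simp: w''_def)
  qed (use assms(1) w''B in auto)
  ultimately show ?thesis by simp
qed

end

lemma iter_pd_append: "iter_pd (cs @ [x]) h = iter_pd cs (pd x h)"
  by (induction cs) auto

lemma smooth_pd: "smooth_on U h \<Longrightarrow> smooth_on U (pd x h)"
  unfolding smooth_on_def by (metis iter_pd_append)

lemma diff_from_ev:
  assumes "\<forall>\<^sub>F t in nhds (p c). f t = g t" "(g has_real_derivative D) (at (p c))"
  shows "f differentiable (at (p c))"
proof -
  have "(f has_real_derivative D) (at (p c))" using DERIV_cong_ev[OF refl assms(1) refl] assms(2) by simp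
  then show ?thesis unfolding real_differentiable_def by blast
qed

lemma smooth_sum_lin:
  assumes U: "open U" and K: "finite K" and f: "\<And>x. x \<in> K \<Longrightarrow> smooth_on U (f x)"
  shows "smooth_on U (\<lambda>u. \<Sum>x\<in>K. a x * f x u)"
proof -
  have der: "((\<lambda>t. \<Sum>x\<in>K. a x * iter_pd cs (f x) (u(c:=t))) has_real_derivative
      (\<Sum>x\<in>K. a x * pd c (iter_pd cs (f x)) u)) (at (u c))" if "u \<in> U" for cs c u
  proof (rule DERIV_sum)
    fix x assume "x \<in> K"
    then have "(\<lambda>t. iter_pd cs (f x) (u(c:=t))) differentiable (at (u c))"
      using f that unfolding smooth_on_def by blast
    from pd_deriv[OF this] show "((\<lambda>t. a x * iter_pd cs (f x) (u(c:=t))) has_real_derivative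
       a x * pd c (iter_pd cs (f x)) u) (at (u c))"
      by (rule DERIV_cmult)
  qed
  have it: "\<forall>u\<in>U. iter_pd cs (\<lambda>u. \<Sum>x\<in>K. a x * f x u) u = (\<Sum>x\<in>K. a x * iter_pd cs (f x) u)" for cs
  proof (induction cs)
    case Nil then show ?case by simp
  next
    case (Cons c cs)
    show ?case
    proof
      fix u assume u: "u \<in> U"
      have "iter_pd (c # cs) (\<lambda>u. \<Sum>x\<in>K. a x * f x u) u = pd c (\<lambda>u. \<Sum>x\<in>K. a x * iter_pd cs (f x) u) u"
        using pd_local[OF U u, of "iter_pd cs (\<lambda>u. \<Sum>x\<in>K. a x * f x u)" "\<lambda>u. \<Sum>x\<in>K. a x * iter_pd cs (f x) u" c]
          Cons.IH by simp
      also have "\<dots> = (\<Sum>x\<in>K. a x * pd c (iter_pd cs (f x)) u)"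
        unfolding pd_def[of c "\<lambda>u. \<Sum>x\<in>K. a x * iter_pd cs (f x) u" u]
        by (rule DERIV_imp_deriv[OF der[OF u]])
      finally show "iter_pd (c # cs) (\<lambda>u. \<Sum>x\<in>K. a x * f x u) u = (\<Sum>x\<in>K. a x * iter_pd (c # cs) (f x) u)"
        by simp
    qed
  qed
  show ?thesis unfolding smooth_on_def
  proof (intro allI conjI ballI)
    fix cs
    have "continuous_on U (\<lambda>u. \<Sum>x\<in>K. a x * iter_pd cs (f x) u)"
      using f unfolding smooth_on_def by (intro continuous_on_sum continuous_on_mult continuous_on_const) auto
    moreover have "continuous_on U (iter_pd cs (\<lambda>u. \<Sum>x\<in>K. a x * f x u)) =
        continuous_on U (\<lambda>u. \<Sum>x\<in>K. a x * iter_pd cs (f x) u)"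
      by (rule continuous_on_cong[OF refl]) (use it in blast)
    ultimately show "continuous_on U (iter_pd cs (\<lambda>u. \<Sum>x\<in>K. a x * f x u))" by simp
    fix c p assume p: "p \<in> U"
    have "\<forall>\<^sub>F t in nhds (p c). iter_pd cs (\<lambda>u. \<Sum>x\<in>K. a x * f x u) (p(c:=t)) = (\<Sum>x\<in>K. a x * iter_pd cs (f x) (p(c:=t)))"
      using upd_eventually[OF U p] by eventually_elim (use it in blast)
    from diff_from_ev[where p=p and c=c, OF this der[of p cs c, OF p]]
    show "(\<lambda>t. iter_pd cs (\<lambda>u. \<Sum>x\<in>K. a x * f x u) (p(c:=t))) differentiable (at (p c))" .
  qed
qed

lemma smooth_affine:
  fixes S :: "('a \<Rightarrow> real) \<Rightarrow> ('b \<Rightarrow> real)" and A :: "'b \<Rightarrow> 'a \<Rightarrow> real" and h :: "('b \<Rightarrow> real) \<Rightarrow> real"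
  assumes U: "open U" and hs: "smooth_on U h" and Sc: "continuous_on UNIV S" and K: "finite K"
    and A0: "\<And>x d. x \<notin> K \<Longrightarrow> A x d = 0"
    and aff: "\<And>y d t. S (y(d:=t)) = (\<lambda>x. S y x + (t - y d) * A x d)"
  shows "smooth_on (S -` U) (\<lambda>y. h (S y))"
proof -
  define Om where "Om = S -` U"
  have Om: "open Om" unfolding Om_def by (rule open_vimage[OF U Sc])
  have chain: "((\<lambda>t. g (S (y(c:=t)))) has_real_derivative (\<Sum>x\<in>K. pd x g (S y) * A x c)) (at (y c))"
    if g: "smooth_on U g" and y: "y \<in> Om" for g y c
  proof -
    have "((\<lambda>t. g (S (y(c:=t)))) has_real_derivative (\<Sum>x\<in>K. pd x g (S (y(c := y c))) * A x c)) (at (y c))"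
    proof (rule curve_chain[where \<gamma> = "\<lambda>t. S (y(c:=t))" and S = K])
      show "finite K" by (rule K)
      show "open U" by (rule U)
      show "S (y(c := y c)) \<in> U" using y by (simp add: Om_def)
      show "continuous_on U (pd x g)" for x by (rule smooth_pd_cont[OF g])
      show "(\<lambda>t. g (p(x:=t))) differentiable (at (p x))" if "p \<in> U" for x p by (rule smooth_diff[OF g that])
      show "S (y(c := t)) x = S (y(c := y c)) x" if "x \<notin> K" for t x using aff[of y c t] A0[OF that] by simp
      show "((\<lambda>t. S (y(c := t)) x) has_real_derivative A x c) (at (y c))" for x
      proof -
        have "(\<lambda>t. S (y(c := t)) x) = (\<lambda>t. S y x + (t - y c) * A x c)" using aff by simp
        moreover have "((\<lambda>t. S y x + (t - y c) * A x c) has_real_derivative (0 + (1 - 0) * A x c)) (at (y c))"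
          by (intro DERIV_add DERIV_const DERIV_cmult_right DERIV_diff DERIV_ident)
        ultimately show ?thesis by simp
      qed
    qed
    then show ?thesis by simp
  qed
  have main: "\<exists>h'. smooth_on U h' \<and> (\<forall>y\<in>Om. iter_pd cs (\<lambda>y. g (S y)) y = h' (S y))" if g: "smooth_on U g" for cs g
  proof (induction cs)
    case Nil
    show ?case using g by (intro exI[of _ g]) simp
  next
    case (Cons c cs)
    then obtain h' where h': "smooth_on U h'" "\<forall>y\<in>Om. iter_pd cs (\<lambda>y. g (S y)) y = h' (S y)" by blast
    define h'' where "h'' = (\<lambda>u. \<Sum>x\<in>K. A x c * pd x h' u)"
    have "smooth_on U h''" unfolding h''_def by (rule smooth_sum_lin[OF U K smooth_pd[OF h'(1)]])
    moreover have "iter_pd (c # cs) (\<lambda>y. g (S y)) y = h'' (S y)" if y: "y \<in> Om" for y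
    proof -
      have "iter_pd (c # cs) (\<lambda>y. g (S y)) y = pd c (\<lambda>y. h' (S y)) y"
        using pd_local[OF Om y, of "iter_pd cs (\<lambda>y. g (S y))" "\<lambda>y. h' (S y)" c] h'(2) by simp
      also have "\<dots> = (\<Sum>x\<in>K. pd x h' (S y) * A x c)"
        unfolding pd_def[of c "\<lambda>y. h' (S y)" y] by (rule DERIV_imp_deriv[OF chain[OF h'(1) y]])
      also have "\<dots> = h'' (S y)" by (simp add: h''_def mult.commute)
      finally show ?thesis .
    qed
    ultimately show ?case by blast
  qed
  show ?thesis unfolding smooth_on_def Om_def[symmetric]
  proof (intro allI conjI ballI)
    fix cs
    obtain h' where h': "smooth_on U h'" "\<forall>y\<in>Om. iter_pd cs (\<lambda>y. h (S y)) y = h' (S y)"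
      using main[OF hs] by blast
    have "continuous_on Om (\<lambda>y. h' (S y))"
    proof (rule continuous_on_compose2[OF smooth_cont[OF h'(1)]])
      show "continuous_on Om S" by (rule continuous_on_subset[OF Sc]) simp
      show "S ` Om \<subseteq> U" by (auto simp: Om_def)
    qed
    moreover have "continuous_on Om (iter_pd cs (\<lambda>y. h (S y))) = continuous_on Om (\<lambda>y. h' (S y))"
      by (rule continuous_on_cong[OF refl]) (use h'(2) in blast)
    ultimately show "continuous_on Om (iter_pd cs (\<lambda>y. h (S y)))" by simp
    fix c p assume p: "p \<in> Om"
    have "\<forall>\<^sub>F t in nhds (p c). iter_pd cs (\<lambda>y. h (S y)) (p(c:=t)) = h' (S (p(c:=t)))"
      using upd_eventually[OF Om p] by eventually_elim (use h'(2) in blast)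
    from diff_from_ev[where p=p and c=c, OF this chain[OF h'(1) p]]
    show "(\<lambda>t. iter_pd cs (\<lambda>y. h (S y)) (p(c:=t))) differentiable (at (p c))" .
  qed
qed

definition Smap :: "nat \<Rightarrow> (coord \<Rightarrow> real) \<Rightarrow> ((nat \<times> nat) option \<Rightarrow> real) \<Rightarrow> coord \<Rightarrow> real" where
  "Smap N p y c = (case c of Z1 \<Rightarrow> y None | Z2 \<Rightarrow> p Z2
     | W j l \<Rightarrow> (if l = 1 \<and> 1 \<le> j \<and> j \<le> N then y (Some (1, j - 1)) - ev (Pe (j - 1)) p
        else if l = 0 \<and> 2 \<le> j \<and> j \<le> N then y (Some (2, j - 2)) + ev (Qe (j - 2)) p + p Z2 * y (Some (1, j - 1))
        else p (W j l)))"

definition Amap :: "nat \<Rightarrow> (coord \<Rightarrow> real) \<Rightarrow> coord \<Rightarrow> (nat \<times> nat) option \<Rightarrow> real" where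
  "Amap N p x d = (case x of Z1 \<Rightarrow> (if d = None then 1 else 0) | Z2 \<Rightarrow> 0
     | W j l \<Rightarrow> (if l = 1 \<and> 1 \<le> j \<and> j \<le> N then (if d = Some (1, j - 1) then 1 else 0)
        else if l = 0 \<and> 2 \<le> j \<and> j \<le> N then (if d = Some (2, j - 2) then 1 else 0) + (if d = Some (1, j - 1) then p Z2 else 0)
        else 0))"

lemma Smap_aff: "Smap N p (y(d:=t)) = (\<lambda>x. Smap N p y x + (t - y d) * Amap N p x d)"
proof
  fix x
  show "Smap N p (y(d:=t)) x = Smap N p y x + (t - y d) * Amap N p x d"
  proof (cases x)
    case (W j l)
    then show ?thesis by (auto simp: Smap_def Amap_def algebra_simps)
  qed (auto simp: Smap_def Amap_def)
qed

lemma Amap0: "x \<notin> Bd N \<Longrightarrow> Amap N p x d = 0"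
  by (cases x) (auto simp: Amap_def Bd_mem)

lemma Smap_cont: "continuous_on UNIV (Smap N p)"
proof (rule continuous_on_coordinatewise_then_product)
  fix x
  have pr: "continuous_on UNIV (\<lambda>y::(nat \<times> nat) option \<Rightarrow> real. y i)" for i by simp
  show "continuous_on UNIV (\<lambda>y. Smap N p y x)"
  proof (cases x)
    case (W j l)
    consider "l = 1 \<and> 1 \<le> j \<and> j \<le> N" | "\<not> (l = 1 \<and> 1 \<le> j \<and> j \<le> N)" "l = 0 \<and> 2 \<le> j \<and> j \<le> N"
      | "\<not> (l = 1 \<and> 1 \<le> j \<and> j \<le> N)" "\<not> (l = 0 \<and> 2 \<le> j \<and> j \<le> N)" by blast
    then show ?thesis
    proof cases
      case 1
      then have "(\<lambda>y. Smap N p y x) = (\<lambda>y. y (Some (1, j - 1)) - ev (Pe (j - 1)) p)"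
        using W by (simp add: Smap_def)
      then show ?thesis by (simp only:) (intro continuous_on_diff pr continuous_on_const)
    next
      case 2
      then have "(\<lambda>y. Smap N p y x) = (\<lambda>y. y (Some (2, j - 2)) + ev (Qe (j - 2)) p + p Z2 * y (Some (1, j - 1)))"
        using W by (simp add: Smap_def)
      then show ?thesis by (simp only:) (intro continuous_on_add continuous_on_mult pr continuous_on_const)
    next
      case 3
      then have "(\<lambda>y. Smap N p y x) = (\<lambda>y. p (W j l))"
        by (intro ext) (use W 3 in \<open>auto simp: Smap_def\<close>)
      then show ?thesis by (simp only:) (rule continuous_on_const)
    qed
  qed (auto simp: Smap_def intro: pr)
qed

lemma Smap_W2[simp]: "Smap N p y (W i 2) = p (W i 2)" by (simp add: Smap_def)
lemma Smap_Z2[simp]: "Smap N p y Z2 = p Z2" by (simp add: Smap_def)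
lemma Smap_Z1[simp]: "Smap N p y Z1 = y None" by (simp add: Smap_def)

lemma Smap_U0: "p \<in> U0 \<Longrightarrow> Smap N p y \<in> U0" by (simp add: U0_def)

lemma psi_Smap:
  assumes q: "q \<in> U0" and r: "N \<le> r"
  shows "psi N (Smap N p (zeta_args r q)) = (\<lambda>c. if c = Z1 \<or> slot N c then psi N q c else psi N p c)"
proof
  fix c
  define y where "y = zeta_args r q"
  have PeS: "ev (Pe k) (Smap N p y) = ev (Pe k) p" for k by (rule agree_W2[OF vars_Pe]) simp
  have QeS: "ev (Qe k) (Smap N p y) = ev (Qe k) p" for k by (rule agree_W2[OF vars_Qe]) simp
  show "psi N (Smap N p y) c = (if c = Z1 \<or> slot N c then psi N q c else psi N p c)"
  proof (cases "slot N c")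
    case True
    then obtain j where "(c = W j 1 \<and> 1 \<le> j \<and> j \<le> N) \<or> (c = W j 0 \<and> 2 \<le> j \<and> j \<le> N)"
      unfolding slot_def by blast
    then show ?thesis
    proof
      assume h: "c = W j 1 \<and> 1 \<le> j \<and> j \<le> N"
      have "psi N (Smap N p y) (W j 1) = Smap N p y (W j 1) + ev (Pe (j - 1)) p"
        using psi_s1[of j N "Smap N p y"] h PeS by simp
      also have "\<dots> = y (Some (1, j - 1))" using h by (simp add: Smap_def)
      also have "\<dots> = zeta1 (j - 1) q"
      proof -
        have "j - 1 \<le> r" using h r by arith
        then show ?thesis by (simp add: y_def zeta_args_def)
      qed
      also have "\<dots> = psi N q (W j 1)" using h zeta1_ev[OF q] by (simp add: psi_def)
      finally show ?thesis using h True by simp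
    next
      assume h: "c = W j 0 \<and> 2 \<le> j \<and> j \<le> N"
      have "psi N (Smap N p y) (W j 0) = Smap N p y (W j 0) - ev (Qe (j - 2)) p
          - p Z2 * (Smap N p y (W j 1) + ev (Pe (j - 1)) p)"
        using psi_s0[of j N "Smap N p y"] h PeS QeS by simp
      also have "\<dots> = y (Some (2, j - 2))" using h by (simp add: Smap_def algebra_simps)
      also have "\<dots> = zeta2 (j - 2) q"
      proof -
        have "j - 2 \<le> r" using h r by arith
        then show ?thesis by (simp add: y_def zeta_args_def)
      qed
      also have "\<dots> = psi N q (W j 0)" using h zeta2_ev[OF q] by (simp add: psi_def)
      finally show ?thesis using h True by simp
    qed
  next
    case False
    then have "psi N (Smap N p y) c = Smap N p y c" by simp
    moreover have "c \<noteq> Z1 \<Longrightarrow> Smap N p y c = p c"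
      using False by (cases c) (auto simp: Smap_def slot_def)
    ultimately show ?thesis using False by (auto simp: y_def zeta_args_def)
  qed
qed

lemma (in setting) forward:
  assumes hz: "\<forall>p\<in>U. hatD2 N \<alpha> p = 0" and p: "p \<in> U"
  shows "\<exists>V r F Om. open V \<and> p \<in> V \<and> V \<subseteq> U \<and> r \<ge> 1 \<and>
              open (Om :: ((nat \<times> nat) option \<Rightarrow> real) set) \<and> smooth_on Om F \<and>
              (\<forall>q\<in>V. zeta_args r q \<in> Om \<and> \<alpha> q = F (zeta_args r q))"
proof -
  have pU0: "p \<in> U0" using p UU0 by blast
  from box_in_open[OF open_BU psi_BU[OF p]] obtain C e where Ce: "finite C" "e > 0"
    "{v. \<forall>c\<in>C. \<bar>v c - psi N p c\<bar> < e} \<subseteq> BU" by blast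
  have Bsub': "box C e (psi N p) \<subseteq> BU" using Ce(3) unfolding box_def .
  interpret bs: boxsetting N U \<alpha> C e "psi N p"
    by (rule boxsetting.intro[OF setting_axioms], unfold boxsetting_axioms_def, intro conjI Ce(1) Bsub' hz)
  define V where "V = psi N -` bs.B \<inter> U0"
  have openV: "open V"
  proof -
    have "\<forall>B. open B \<longrightarrow> open (psi N -` B \<inter> U0)"
      using continuous_on_open_vimage[OF open_U0, of "psi N"] psi_cont[of N] by simp
    then have "open (psi N -` box C e (psi N p) \<inter> U0)" using open_box[OF Ce(1), of e "psi N p"] by blast
    then show ?thesis unfolding V_def .
  qed
  have pV: "p \<in> V" unfolding V_def using pU0 Ce(2) by (simp add: box_def)
  have VU: "V \<subseteq> U"
  proof
    fix q assume "q \<in> V"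
    then have "psi N q \<in> BU" using bs.Bsub unfolding V_def by blast
    then show "q \<in> U" by (simp add: BU_def psinv_psi)
  qed
  define r where "r = max 1 N"
  define S where "S = Smap N p"
  define Om where "Om = S -` U"
  define F where "F = (\<lambda>y. \<alpha> (S y))"
  have openOm: "open Om" unfolding Om_def S_def by (rule open_vimage[OF openU Smap_cont])
  have smF: "smooth_on Om F" unfolding Om_def F_def S_def
    by (rule smooth_affine[OF openU sm Smap_cont finite_Bd Amap0 Smap_aff])
  have main: "zeta_args r q \<in> Om \<and> \<alpha> q = F (zeta_args r q)" if q: "q \<in> V" for q
  proof -
    have q0: "q \<in> U0" using q by (simp add: V_def)
    have qB: "psi N q \<in> bs.B" using q by (simp add: V_def)
    have pB: "psi N p \<in> bs.B" using Ce(2) by (simp add: box_def)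
    define y where "y = zeta_args r q"
    have ps: "psi N (S y) = (\<lambda>c. if c = Z1 \<or> slot N c then psi N q c else psi N p c)"
      unfolding S_def y_def by (rule psi_Smap[OF q0]) (simp add: r_def)
    have SB: "psi N (S y) \<in> bs.B" unfolding ps by (rule box_mix[OF qB pB])
    then have "psi N (S y) \<in> BU" using bs.Bsub by blast
    then have SU: "S y \<in> U" by (simp add: BU_def psinv_psi)
    have "G (psi N q) = G (psi N (S y))"
      by (rule bs.G_const[OF qB SB]) (simp_all add: ps)
    then have "\<alpha> q = \<alpha> (S y)" by (simp add: alpha_G[symmetric])
    then show ?thesis using SU by (simp add: Om_def F_def y_def)
  qed
  have r1: "r \<ge> 1" by (simp add: r_def)
  show ?thesis
    by (rule exI[of _ V], rule exI[of _ r], rule exI[of _ F], rule exI[of _ Om])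
       (intro conjI openV pV VU openOm smF r1 ballI main)
qed

theorem theorem19:
  fixes \<alpha> :: "(coord \<Rightarrow> real) \<Rightarrow> real" and U :: "(coord \<Rightarrow> real) set" and N :: nat
  assumes "open U"
    and "U \<subseteq> {p. p (W 0 2) \<noteq> 0}"
    and "depends_upto N \<alpha>"
    and "smooth_on U \<alpha>"
  shows "(\<forall>p\<in>U. hatD2 N \<alpha> p = 0) \<longleftrightarrow>
         (\<forall>p\<in>U. \<exists>V r F Om. open V \<and> p \<in> V \<and> V \<subseteq> U \<and> r \<ge> 1 \<and>
              open (Om :: ((nat \<times> nat) option \<Rightarrow> real) set) \<and> smooth_on Om F \<and>
              (\<forall>q\<in>V. zeta_args r q \<in> Om \<and> \<alpha> q = F (zeta_args r q)))"
proof
  have UU0: "U \<subseteq> U0" using assms(2) by (simp add: U0_def)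
  interpret st: setting N U \<alpha>
    by (rule setting.intro[OF assms(1) UU0 assms(3) assms(4)])
  {
    assume hz: "\<forall>p\<in>U. hatD2 N \<alpha> p = 0"
    show "\<forall>p\<in>U. \<exists>V r F Om. open V \<and> p \<in> V \<and> V \<subseteq> U \<and> r \<ge> 1 \<and>
              open (Om :: ((nat \<times> nat) option \<Rightarrow> real) set) \<and> smooth_on Om F \<and>
              (\<forall>q\<in>V. zeta_args r q \<in> Om \<and> \<alpha> q = F (zeta_args r q))"
      by (intro ballI st.forward[OF hz])
  }
  {
    assume R: "\<forall>p\<in>U. \<exists>V r F Om. open V \<and> p \<in> V \<and> V \<subseteq> U \<and> r \<ge> 1 \<and>
              open (Om :: ((nat \<times> nat) option \<Rightarrow> real) set) \<and> smooth_on Om F \<and>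
              (\<forall>q\<in>V. zeta_args r q \<in> Om \<and> \<alpha> q = F (zeta_args r q))"
    show "\<forall>p\<in>U. hatD2 N \<alpha> p = 0"
    proof
      fix p assume p: "p \<in> U"
      from bspec[OF R p] obtain V r F and Om :: "((nat \<times> nat) option \<Rightarrow> real) set" where
        h0: "open V \<and> p \<in> V \<and> V \<subseteq> U \<and> r \<ge> 1 \<and> open Om \<and> smooth_on Om F \<and>
           (\<forall>q\<in>V. zeta_args r q \<in> Om \<and> \<alpha> q = F (zeta_args r q))"
        by (elim exE) (erule that)
      then have h: "open V" "p \<in> V" "V \<subseteq> U" "open Om" "smooth_on Om F"
           "\<forall>q\<in>V. zeta_args r q \<in> Om \<and> \<alpha> q = F (zeta_args r q)" by simp_all
      have "V \<subseteq> U0" using h(3) UU0 by (rule subset_trans)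
      then show "hatD2 N \<alpha> p = 0" by (rule backward[OF h(1) _ assms(3) h(4) h(5) h(6) h(2)])
    qed
  }
qed


end
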